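(* Let $f:\mathbb{R}^N\to[0,\infty]$ be a symmetric function and define $F:\mathbb{H}_N\to[0,\infty]$ by $F(X)=f(\lambda(X))$. Let $\gamma>0$. Then $$\mathcal{Q}_\gamma(F)=\mathcal{Q}_\gamma(f)\circ\lambda .$$ Moreover, for every $\rho>\gamma$ and every $X\in\mathbb{H}_N$, $$\operatorname{prox}_{\mathcal{Q}_\gamma(F)/\rho}(X)=U\,\operatorname{diag}\!\big(\operatorname{prox}_{\mathcal{Q}_\gamma(f)/\rho}(\lambda(X))\big)\,U^*,$$ where $X=U\operatorname{diag}(\lambda(X))U^*$ is any spectral decomposition of $X$ with $U$ unitary.
   Context: $\mathbb{H}_N$ denotes the real vector space of $N\times N$ complex Hermitian matrices with the Frobenius inner product $\langle X,Y\rangle_F$ and norm $\|\cdot\|_F$; $\mathbb{R}^N$ carries the Euclidean norm. For $X\in\mathbb{H}_N$, $\lambda(X)\in\mathbb{R}^N$ is the vector of eigenvalues of $X$ ordered non-increasingly. A function $f:\mathbb{R}^N\to[0,\infty]$ is symmetric if $f(\Pi x)=f(x)$ for every permutation matrix $\Pi$ and every $x$. For a function $g$ on a real Hilbert space $\mathcal{H}$ and $\gamma>0$, the quadratic envelope is $$\mathcal{Q}_\gamma(g)(x)=\sup_{\alpha\in\mathbb{R},\,y\in\mathcal{H}}\Big\{\alpha-\tfrac{\gamma}{2}\|x-y\|^2:\ \alpha-\tfrac{\gamma}{2}\|\cdot-y\|^2\le g\Big\}.$$ For a function $h$ on $\mathcal{H}$ and $\rho>0$, $\operatorname{prox}_{h/\rho}(w)=\operatorname{argmin}_{v\in\mathcal{H}}\big(h(v)/\rho+\tfrac12\|v-w\|^2\big)$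 (for $\rho>\gamma$ and $h=\mathcal{Q}_\gamma(\cdot)$ this is single-valued). *)

theory Defs
  imports "HOL-Analysis.Analysis" "HOL-Computational_Algebra.Polynomial"
begin

text \<open>N x N complex matrices are represented by the type complex^'n^'n, with N = CARD('n).
  The HOL-Analysis norm on this type is exactly the Frobenius norm, and the norm on
  real^'n is the Euclidean norm.  The index type carries a linear order, used to list
  eigenvalues non-increasingly.\<close>

definition adj :: "complex^'n^'m \<Rightarrow> complex^'m^'n" where
  "adj A = (\<chi> i j. cnj (A $ j $ i))"

definition hermitian :: "complex^'n^'n \<Rightarrow> bool" where
  "hermitian X \<longleftrightarrow> adj X = X"

definition unitary :: "complex^'n^'n \<Rightarrow> bool" where
  "unitary U \<longleftrightarrow> U ** adj U = mat 1 \<and> adj U ** U = mat 1"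

definition Herm :: "(complex^'n^'n) set" where
  "Herm = {X. hermitian X}"

definition diagm :: "real^'n \<Rightarrow> complex^'n^'n" where
  "diagm d = (\<chi> i j. if i = j then complex_of_real (d $ i) else 0)"

definition charpoly :: "complex^'n^'n \<Rightarrow> complex poly" where
  "charpoly X = det (\<chi> i j. (if i = j then [:0, 1:] else 0) - [:X $ i $ j:])"

definition eigvals :: "complex^'n::{finite,linorder}^'n::{finite,linorder} \<Rightarrow> real^'n::{finite,linorder}" where
  "eigvals X = (THE d. (\<forall>i j. i \<le> j \<longrightarrow> d $ j \<le> d $ i) \<and>
       (\<forall>a. card {i. complex_of_real (d $ i) = a} = order a (charpoly X)))"

definition symmetric_fun :: "(real^'n \<Rightarrow> ereal) \<Rightarrow> bool" where
  "symmetric_fun f \<longleftrightarrow> (\<forall>p x. p permutes (UNIV :: 'n set) \<longrightarrow> f (\<chi> i. x $ p i) = f x)"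

definition qenv :: "'a::real_normed_vector set \<Rightarrow> real \<Rightarrow> ('a \<Rightarrow> ereal) \<Rightarrow> 'a \<Rightarrow> ereal" where
  "qenv S \<gamma> g x = Sup {ereal (\<alpha> - \<gamma> / 2 * (norm (x - y))\<^sup>2) | \<alpha> y.
       y \<in> S \<and> (\<forall>z\<in>S. ereal (\<alpha> - \<gamma> / 2 * (norm (z - y))\<^sup>2) \<le> g z)}"

definition prox :: "'a::real_normed_vector set \<Rightarrow> ('a \<Rightarrow> ereal) \<Rightarrow> real \<Rightarrow> 'a \<Rightarrow> 'a set" where
  "prox S h \<rho> w = {v \<in> S. \<forall>u\<in>S.
       h v / ereal \<rho> + ereal ((norm (v - w))\<^sup>2 / 2) \<le> h u / ereal \<rho> + ereal ((norm (u - w))\<^sup>2 / 2)}"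

end

theory Submission
  imports Defs
begin

lemma adj_nth[simp]: "adj A $ i $ j = cnj (A $ j $ i)"
  by (simp add: adj_def)

lemma adj_adj[simp]: "adj (adj A) = A"
  by (simp add: adj_def vec_eq_iff)

lemma adj_mult: "adj (A ** B) = adj B ** adj (A::complex^'n^'m)"
  by (simp add: vec_eq_iff matrix_matrix_mult_def mult.commute)

lemma adj_mat1[simp]: "adj (mat 1 :: complex^'n^'n) = mat 1"
  by (simp add: vec_eq_iff mat_def)

lemma diagm_nth[simp]: "diagm d $ i $ j = (if i = j then complex_of_real (d $ i) else 0)"
  by (simp add: diagm_def)

lemma adj_diagm[simp]: "adj (diagm d) = diagm d"
  by (simp add: vec_eq_iff)

lemma adj_add: "adj (A + B) = adj A + adj B"
  by (simp add: vec_eq_iff)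
lemma adj_diff: "adj (A - B) = adj A - adj B"
  by (simp add: vec_eq_iff)
lemma adj_scaleR: "adj (c *\<^sub>R A) = c *\<^sub>R adj A"
  by (simp add: vec_eq_iff)

lemma diagm_diff: "diagm (x - y) = diagm x - diagm y"
  by (simp add: vec_eq_iff)

lemma unitary_adj: "unitary U \<Longrightarrow> unitary (adj U)"
  by (simp add: unitary_def)

lemma unitaryI: "adj U ** U = mat 1 \<Longrightarrow> unitary (U::complex^'n^'n)"
  unfolding unitary_def using matrix_left_right_inverse by blast

lemma unitary_mult: assumes "unitary U" "unitary V" shows "unitary (U ** V)"
proof (rule unitaryI)
  have "adj (U ** V) ** (U ** V) = adj V ** (adj U ** U) ** V"
    by (simp add: adj_mult matrix_mul_assoc)
  also have "\<dots> = mat 1" using assms by (simp add: unitary_def)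
  finally show "adj (U ** V) ** (U ** V) = mat 1" .
qed

lemma hermitian_conj:
  "hermitian (U ** diagm d ** adj U)"
  by (simp add: hermitian_def adj_mult matrix_mul_assoc)

lemma Herm_conj: "U ** diagm d ** adj U \<in> Herm"
  using hermitian_conj by (simp add: Herm_def)

lemma cnj_mult_self: "cnj z * z = complex_of_real ((cmod z)\<^sup>2)"
  using complex_norm_square[of z] by (simp only: mult.commute)

lemma trace_adj_self: "trace (adj A ** A) = complex_of_real (\<Sum>i\<in>UNIV. \<Sum>j\<in>UNIV. (cmod (A $ i $ j))\<^sup>2)"
  unfolding trace_def matrix_matrix_mult_def
  apply (simp add: of_real_sum)
  apply (subst sum.swap)
  apply (rule sum.cong, simp)+
  by (simp add: cnj_mult_self)

lemma norm_mat_sq: "(norm (A::complex^'n^'m))\<^sup>2 = (\<Sum>i\<in>UNIV. \<Sum>j\<in>UNIV. (cmod (A $ i $ j))\<^sup>2)"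
  unfolding norm_vec_def L2_set_def
  by (simp add: sum_nonneg)

lemma norm_mat_sq_trace: "(norm (A::complex^'n^'n))\<^sup>2 = Re (trace (adj A ** A))"
  by (simp add: trace_adj_self norm_mat_sq)

lemma unitary_norm_left: assumes "unitary U" shows "norm (U ** A) = norm (A::complex^'n^'n)"
proof -
  have "adj (U ** A) ** (U ** A) = adj A ** (adj U ** U) ** A"
    by (simp add: adj_mult matrix_mul_assoc)
  also have "\<dots> = adj A ** A" using assms by (simp add: unitary_def)
  finally have "(norm (U ** A))\<^sup>2 = (norm A)\<^sup>2" by (simp add: norm_mat_sq_trace)
  thus ?thesis by (simp add: power2_eq_iff_nonneg)
qed

lemma unitary_norm_right: assumes "unitary U" shows "norm (A ** U) = norm (A::complex^'n^'n)"
proof -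
  have "trace (adj (A ** U) ** (A ** U)) = trace (adj U ** ((adj A ** A) ** U))"
    by (simp add: adj_mult matrix_mul_assoc)
  also have "\<dots> = trace (((adj A ** A) ** U) ** adj U)" by (rule trace_mul_sym)
  also have "\<dots> = trace (adj A ** A)" using assms by (simp add: unitary_def flip: matrix_mul_assoc)
  finally have "(norm (A ** U))\<^sup>2 = (norm A)\<^sup>2" by (simp add: norm_mat_sq_trace)
  thus ?thesis by (simp add: power2_eq_iff_nonneg)
qed

lemma unitary_norm_conj: "unitary U \<Longrightarrow> norm (U ** A ** adj U) = norm (A::complex^'n^'n)"
  by (simp add: unitary_norm_left unitary_norm_right unitary_adj flip: matrix_mul_assoc)

lemma norm_diagm: "norm (diagm d :: complex^'n^'n) = norm (d::real^'n)"
proof -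
  have e: "\<And>i j. (cmod (diagm d $ i $ j :: complex))\<^sup>2 = (if j = i then (d$i)\<^sup>2 else 0)"
    by auto
  have "(norm (diagm d :: complex^'n^'n))\<^sup>2 = (norm d)\<^sup>2"
    unfolding norm_mat_sq e
    by (simp add: norm_vec_def L2_set_def sum_nonneg)
  thus ?thesis by (simp add: power2_eq_iff_nonneg)
qed

lemma mat_sub_ldistrib: "(A::'a::ring_1^'n^'m) ** (B - C) = A ** B - A ** C"
  by (simp add: vec_eq_iff matrix_matrix_mult_def sum_subtractf algebra_simps)
lemma mat_sub_rdistrib: "((B::'a::ring_1^'n^'m) - C) ** A = B ** A - C ** A"
  by (simp add: vec_eq_iff matrix_matrix_mult_def sum_subtractf algebra_simps)

lemma conj_diff: "U ** diagm x ** adj U - U ** diagm y ** adj U = U ** diagm (x - y) ** adj U"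
  by (simp add: diagm_diff matrix_add_ldistrib mat_sub_ldistrib mat_sub_rdistrib)

lemma norm_conj_diff: "unitary U \<Longrightarrow>
  norm (U ** diagm x ** adj U - U ** diagm y ** adj U) = norm (x - y)"
  by (simp add: conj_diff unitary_norm_conj norm_diagm)


definition cinner :: "complex^'n \<Rightarrow> complex^'n \<Rightarrow> complex" where
  "cinner x y = (\<Sum>i\<in>UNIV. cnj (x $ i) * y $ i)"

lemma scaleR_comp: "(c *\<^sub>R x) $ i = (of_real c :: complex) * x $ i"
  unfolding vector_scaleR_component by (rule scaleR_conv_of_real)

lemma cinner_add_right: "cinner x (y + z) = cinner x y + cinner x z"
  by (simp add: cinner_def distrib_left sum.distrib)
lemma cinner_diff_right: "cinner x (y - z) = cinner x y - cinner x z"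
  by (simp add: cinner_def right_diff_distrib sum_subtractf)
lemma cinner_scale_right: "cinner x (c *s y) = c * cinner x y"
  by (simp add: cinner_def sum_distrib_left algebra_simps)
lemma cinner_scaleR_right: "cinner x (c *\<^sub>R y) = of_real c * cinner x y"
  by (simp add: cinner_def sum_distrib_left algebra_simps scaleR_comp del: vector_scaleR_component)
lemma cinner_add_left: "cinner (x + y) z = cinner x z + cinner y z"
  by (simp add: cinner_def distrib_right sum.distrib)
lemma cinner_scaleR_left: "cinner (c *\<^sub>R x) y = of_real c * cinner x y"
  by (simp add: cinner_def sum_distrib_left algebra_simps scaleR_comp del: vector_scaleR_component)
lemma cinner_scale_left: "cinner (c *s x) y = cnj c * cinner x y"
  by (simp add: cinner_def sum_distrib_left algebra_simps)
lemma cinner_sum_right: "cinner x (sum f A) = (\<Sum>a\<in>A. cinner x (f a))"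
  by (simp add: cinner_def sum_component sum_distrib_left sum.swap[of _ UNIV])
lemma cinner_cnj: "cinner y x = cnj (cinner x y)"
  by (simp add: cinner_def mult.commute)
lemma cinner_zero_right[simp]: "cinner x 0 = 0"
  by (simp add: cinner_def)
lemma cinner_self: "cinner x x = of_real ((norm x)\<^sup>2)"
  by (simp add: cinner_def norm_vec_def L2_set_def sum_nonneg cnj_mult_self of_real_sum)
lemma cinner_self_eq0: "cinner x x = 0 \<longleftrightarrow> x = 0"
  by (simp add: cinner_self)

lemma mv_scaleR: "(X::complex^'n^'m) *v (c *\<^sub>R x) = c *\<^sub>R (X *v x)"
  by (simp add: vec_eq_iff matrix_vector_mult_def scaleR_comp sum_distrib_left algebra_simps del: vector_scaleR_component)
lemma mv_add: "(X::complex^'n^'m) *v (x + y) = X *v x + X *v y"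
  by (simp add: vec_eq_iff matrix_vector_mult_def sum.distrib algebra_simps)
lemma mv_diff: "(X::complex^'n^'m) *v (x - y) = X *v x - X *v y"
  by (simp add: vec_eq_iff matrix_vector_mult_def sum_subtractf algebra_simps)
lemma mv_scale: "(X::complex^'n^'m) *v (c *s x) = c *s (X *v x)"
  by (simp add: vec_eq_iff matrix_vector_mult_def sum_distrib_left algebra_simps)

lemma herm_cinner: assumes "hermitian X"
  shows "cinner x (X *v y) = cinner (X *v x) y"
proof -
  have X: "\<And>i j. cnj (X $ j $ i) = X $ i $ j"
    using assms unfolding hermitian_def by (metis adj_nth)
  have "cinner x (X *v y) = (\<Sum>i\<in>UNIV. \<Sum>j\<in>UNIV. cnj (x $ i) * (X $ i $ j * y $ j))"
    by (simp add: cinner_def matrix_vector_mult_def sum_distrib_left)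
  also have "\<dots> = (\<Sum>j\<in>UNIV. \<Sum>i\<in>UNIV. cnj (x $ i) * (X $ i $ j * y $ j))"
    by (rule sum.swap)
  also have "\<dots> = cinner (X *v x) y"
    unfolding cinner_def matrix_vector_mult_def
    by (simp add: X sum_distrib_left mult_ac)
  finally show ?thesis .
qed

lemma herm_cinner_real: assumes "hermitian X"
  shows "of_real (Re (cinner x (X *v x))) = cinner x (X *v x)"
proof -
  have "cnj (cinner x (X *v x)) = cinner x (X *v x)"
    by (metis assms cinner_cnj herm_cinner)
  thus ?thesis by (metis Reals_cnj_iff complex_is_Real_iff of_real_Re)
qed

lemma exists_orth:
  fixes V :: "nat \<Rightarrow> complex^'n"
  assumes k: "k < CARD('n)"
    and on: "\<forall>i<k. \<forall>j<k. cinner (V i) (V j) = (if i = j then 1 else 0)"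
  shows "\<exists>w. w \<noteq> 0 \<and> (\<forall>i<k. cinner (V i) w = 0)"
proof -
  have "vec.span (V ` {..<k}) \<noteq> UNIV"
  proof
    assume "vec.span (V ` {..<k}) = UNIV"
    hence "vec.dim (UNIV::(complex^'n) set) \<le> card (V ` {..<k})"
      by (intro vec.dim_le_card) auto
    also have "\<dots> \<le> k" using card_image_le[of "{..<k}" V] by simp
    finally show False using k vec_dim_card[where 'a=complex and 'n='n] by simp
  qed
  then obtain e where e: "e \<notin> vec.span (V ` {..<k})" by blast
  define w where "w = e - (\<Sum>i<k. cinner (V i) e *s V i)"
  have "w \<noteq> 0"
  proof
    assume "w = 0"
    hence "e = (\<Sum>i<k. cinner (V i) e *s V i)" by (simp add: w_def)
    also have "\<dots> \<in> vec.span (V ` {..<k})"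
      by (intro vec.span_sum vec.span_scale vec.span_base) auto
    finally show False using e by simp
  qed
  moreover have "\<forall>j<k. cinner (V j) w = 0"
  proof (intro allI impI)
    fix j assume j: "j < k"
    have "cinner (V j) w = cinner (V j) e - (\<Sum>i<k. cinner (V i) e * cinner (V j) (V i))"
      by (simp add: w_def cinner_diff_right cinner_sum_right cinner_scale_right)
    also have "(\<Sum>i<k. cinner (V i) e * cinner (V j) (V i)) = (\<Sum>i<k. if i = j then cinner (V i) e else 0)"
      by (rule sum.cong) (use on j in auto)
    also have "\<dots> = cinner (V j) e" using j by simp
    finally show "cinner (V j) w = 0" by simp
  qed
  ultimately show ?thesis by blast
qed


lemma cinner_diff_left: "cinner (x - y) z = cinner x z - cinner y z"
  by (simp add: cinner_def left_diff_distrib sum_subtractf)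

lemma cinner_cont: "continuous_on UNIV (\<lambda>x. cinner v x)"
  unfolding cinner_def by (intro continuous_intros)

lemma q_cont: "continuous_on UNIV (\<lambda>x. Re (cinner x ((X::complex^'n^'n) *v x)))"
  unfolding cinner_def matrix_vector_mult_def by (intro continuous_intros)

lemma q_scale: "Re (cinner (c *\<^sub>R z) (X *v (c *\<^sub>R z))) = c\<^sup>2 * Re (cinner z (X *v z))"
  by (simp add: mv_scaleR cinner_scaleR_left cinner_scaleR_right power2_eq_square)

lemma norm_sq_cinner: "(norm x)\<^sup>2 = Re (cinner x x)"
  by (simp add: cinner_self)

lemma eig_step:
  fixes X :: "complex^'n^'n" and V :: "nat \<Rightarrow> complex^'n"
  assumes herm: "hermitian X" and k: "k < CARD('n)"
    and on: "\<forall>i<k. \<forall>j<k. cinner (V i) (V j) = (if i = j then 1 else 0)"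
    and ev: "\<forall>i<k. \<exists>c::real. X *v V i = of_real c *s V i"
  shows "\<exists>x \<mu>. norm x = 1 \<and> (\<forall>i<k. cinner (V i) x = 0) \<and> X *v x = of_real \<mu> *s x"
proof -
  define C where "C = {x. \<forall>i<k. cinner (V i) x = 0}"
  define S where "S = sphere 0 1 \<inter> C"
  define q where "q x = Re (cinner x (X *v x))" for x
  have "closed C"
  proof -
    have "C = (\<Inter>i<k. {x. cinner (V i) x = 0})" by (auto simp: C_def)
    moreover have "closed {x. cinner (V i) x = 0}" for i
      using cinner_cont[of "V i"] by (intro closed_Collect_eq) (auto intro: continuous_intros)
    ultimately show ?thesis by auto
  qed
  hence "compact S" unfolding S_def by (intro compact_Int_closed) auto
  moreover have "S \<noteq> {}"
  proof -
    obtain w where w: "w \<noteq> 0" "\<forall>i<k. cinner (V i) w = 0" using exists_orth[OF k on] by blast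
    have "(1 / norm w) *\<^sub>R w \<in> S" using w by (auto simp: S_def C_def cinner_scaleR_right)
    thus ?thesis by blast
  qed
  moreover have "continuous_on S q" unfolding q_def
    using q_cont continuous_on_subset by blast
  ultimately obtain x where xS: "x \<in> S" and xmax: "\<forall>y\<in>S. q y \<le> q x"
    using continuous_attains_sup by blast
  define \<mu> where "\<mu> = q x"
  have nx: "norm x = 1" and xC: "\<forall>i<k. cinner (V i) x = 0" using xS by (auto simp: S_def C_def)
  have cx: "cinner x x = 1" using nx by (simp add: cinner_self)
  have cxX: "cinner x (X *v x) = of_real \<mu>" unfolding \<mu>_def q_def using herm_cinner_real[OF herm] by simp
  define y where "y = X *v x - of_real \<mu> *s x"
  have Vy: "cinner (V i) y = 0" if i: "i < k" for i
  proof -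
    obtain c :: real where c: "X *v V i = of_real c *s V i" using ev i by blast
    have "cinner (V i) (X *v x) = cinner (X *v V i) x" by (rule herm_cinner[OF herm])
    also have "\<dots> = 0" using xC i by (simp add: c cinner_scale_left)
    finally show ?thesis using xC i by (simp add: y_def cinner_diff_right cinner_scale_right)
  qed
  have xy: "cinner x y = 0" by (simp add: y_def cinner_diff_right cinner_scale_right cx cxX)
  have yx: "cinner y x = 0" using xy by (metis cinner_cnj complex_cnj_zero)
  have "y = 0"
  proof (rule ccontr)
    assume "y \<noteq> 0"
    define a where "a = (norm y)\<^sup>2"
    have a: "a > 0" using \<open>y \<noteq> 0\<close> by (simp add: a_def)
    have cyy: "cinner y y = of_real a" by (simp add: a_def cinner_self)
    have yXx: "cinner y (X *v x) = of_real a"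
    proof -
      have "X *v x = y + of_real \<mu> *s x" by (simp add: y_def)
      hence "cinner y (X *v x) = cinner y y + of_real \<mu> * cinner y x"
        by (simp add: cinner_add_right cinner_scale_right)
      thus ?thesis by (simp add: yx cyy)
    qed
    have xXy: "cinner x (X *v y) = of_real a"
      using yXx by (metis herm_cinner[OF herm] cinner_cnj complex_cnj_complex_of_real)
    define b where "b = \<mu> * a - q y"
    define t where "t = a / (\<bar>b\<bar> + 1)"
    have t: "t > 0" using a by (simp add: t_def)
    define z where "z = x + t *\<^sub>R y"
    have zC: "z \<in> C" using xC Vy by (simp add: C_def z_def cinner_add_right cinner_scaleR_right)
    have czz: "cinner z z = of_real (1 + t\<^sup>2 * a)"
      by (simp add: z_def cinner_add_left cinner_add_right cinner_scaleR_left cinner_scaleR_right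
          cx xy yx cyy power2_eq_square)
    hence nz2: "(norm z)\<^sup>2 = 1 + t\<^sup>2 * a" by (simp add: norm_sq_cinner)
    hence nz: "norm z > 0" using a by (metis add_pos_nonneg less_numeral_extra(1) mult_nonneg_nonneg
          not_less power2_less_eq_zero_iff zero_less_norm_iff norm_zero zero_le_power2 less_le)
    have qz: "q z = \<mu> + 2 * t * a + t\<^sup>2 * q y"
    proof -
      have "cinner z (X *v z) = cinner x (X *v x) + of_real t * cinner x (X *v y)
          + of_real t * cinner y (X *v x) + of_real t * of_real t * cinner y (X *v y)"
        by (simp add: z_def mv_add mv_scaleR cinner_add_left cinner_add_right cinner_scaleR_left
            cinner_scaleR_right algebra_simps)
      also have "\<dots> = of_real (\<mu> + 2 * t * a) + of_real (t\<^sup>2) * cinner y (X *v y)"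
        by (simp add: cxX xXy yXx power2_eq_square algebra_simps)
      finally show ?thesis by (simp add: q_def)
    qed
    have "(1 / norm z) *\<^sub>R z \<in> S"
      using zC nz by (auto simp: S_def C_def cinner_scaleR_right)
    hence "q ((1 / norm z) *\<^sub>R z) \<le> \<mu>" using xmax by (simp add: \<mu>_def)
    hence "(1 / norm z)\<^sup>2 * q z \<le> \<mu>" by (simp add: q_def q_scale)
    hence "q z \<le> \<mu> * (norm z)\<^sup>2" using nz
      by (simp add: field_simps power2_eq_square)
    hence "\<mu> + 2 * t * a + t\<^sup>2 * q y \<le> \<mu> * (1 + t\<^sup>2 * a)" by (simp add: qz nz2)
    hence "2 * t * a \<le> t\<^sup>2 * b" by (simp add: b_def algebra_simps)
    hence "2 * a \<le> t * b" using t by (simp add: power2_eq_square)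
    also have "t * b \<le> t * \<bar>b\<bar>" using t by (simp add: mult_left_mono)
    also have "t * \<bar>b\<bar> < a"
    proof -
      have "t * \<bar>b\<bar> = a * (\<bar>b\<bar> / (\<bar>b\<bar> + 1))" by (simp add: t_def)
      also have "\<dots> < a * 1" using a by (intro mult_strict_left_mono) auto
      finally show ?thesis by simp
    qed
    finally show False using a by simp
  qed
  hence "X *v x = of_real \<mu> *s x" by (simp add: y_def)
  thus ?thesis using nx xC by blast
qed


lemma eig_family:
  fixes X :: "complex^'n^'n"
  assumes herm: "hermitian X"
  shows "k \<le> CARD('n) \<Longrightarrow> \<exists>V d. (\<forall>i<k. \<forall>j<k. cinner (V i) (V j) = (if i = j then 1 else 0))
          \<and> (\<forall>i<k. X *v V i = of_real (d i) *s V i)"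
proof (induction k)
  case 0
  then show ?case by auto
next
  case (Suc k)
  then obtain V d where on: "\<forall>i<k. \<forall>j<k. cinner (V i) (V j) = (if i = j then 1 else 0)"
    and ev: "\<forall>i<k. X *v V i = of_real (d i) *s V i" by auto
  have "\<forall>i<k. \<exists>c::real. X *v V i = of_real c *s V i" using ev by blast
  from eig_step[OF herm _ on this] Suc.prems obtain x \<mu> where
    x: "norm x = 1" "\<forall>i<k. cinner (V i) x = 0" "X *v x = of_real \<mu> *s x" by auto
  have cx: "cinner x x = 1" using x(1) by (simp add: cinner_self)
  have xV: "\<forall>i<k. cinner x (V i) = 0" using x(2) by (metis cinner_cnj complex_cnj_zero)
  define V' where "V' = V(k := x)"
  define d' where "d' = d(k := \<mu>)"
  have "\<forall>i<Suc k. \<forall>j<Suc k. cinner (V' i) (V' j) = (if i = j then 1 else 0)"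
    using on x(2) xV cx by (auto simp: V'_def less_Suc_eq)
  moreover have "\<forall>i<Suc k. X *v V' i = of_real (d' i) *s V' i"
    using ev x(3) by (auto simp: V'_def d'_def less_Suc_eq)
  ultimately show ?case by blast
qed

theorem spectral:
  fixes X :: "complex^'n^'n"
  assumes herm: "hermitian X"
  shows "\<exists>U d. unitary U \<and> X = U ** diagm d ** adj U"
proof -
  obtain V d where on: "\<forall>i<CARD('n). \<forall>j<CARD('n). cinner (V i) (V j) = (if i = j then 1 else 0)"
    and ev: "\<forall>i<CARD('n). X *v V i = of_real (d i) *s V i"
    using eig_family[OF herm, of "CARD('n)"] by auto
  obtain h where h: "bij_betw h {0..<CARD('n)} (UNIV::'n set)"
    using ex_bij_betw_nat_finite[of "UNIV::'n set"] by auto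
  define g where "g = inv_into {0..<CARD('n)} h"
  have gb: "bij_betw g (UNIV::'n set) {0..<CARD('n)}" unfolding g_def by (rule bij_betw_inv_into[OF h])
  have g_lt: "g a < CARD('n)" for a using gb by (auto simp: bij_betw_def)
  have g_inj: "g a = g b \<longleftrightarrow> a = b" for a b using gb by (auto simp: bij_betw_def inj_on_def)
  define U :: "complex^'n^'n" where "U = (\<chi> i j. V (g j) $ i)"
  define e :: "real^'n" where "e = (\<chi> j. d (g j))"
  have "adj U ** U = mat 1"
  proof -
    have "(adj U ** U) $ a $ b = (if a = b then 1 else 0)" for a b
    proof -
      have "(adj U ** U) $ a $ b = cinner (V (g a)) (V (g b))"
        by (simp add: U_def matrix_matrix_mult_def cinner_def)
      also have "\<dots> = (if a = b then 1 else 0)" using on g_lt g_inj by simp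
      finally show ?thesis .
    qed
    thus ?thesis by (simp add: vec_eq_iff mat_def)
  qed
  hence uU: "unitary U" by (rule unitaryI)
  have XU: "X ** U = U ** diagm e"
  proof -
    have "(X ** U) $ i $ j = (U ** diagm e) $ i $ j" for i j
    proof -
      have "(X ** U) $ i $ j = (X *v V (g j)) $ i"
        by (simp add: U_def matrix_matrix_mult_def matrix_vector_mult_def)
      also have "\<dots> = of_real (d (g j)) * V (g j) $ i" using ev g_lt by simp
      also have "\<dots> = (U ** diagm e) $ i $ j"
        by (simp add: U_def e_def matrix_matrix_mult_def if_distrib cong: if_cong)
      finally show ?thesis .
    qed
    thus ?thesis by (simp add: vec_eq_iff)
  qed
  have "X = X ** (U ** adj U)" using uU by (simp add: unitary_def)
  also have "\<dots> = U ** diagm e ** adj U" by (simp add: matrix_mul_assoc XU)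
  finally show ?thesis using uU by blast
qed


definition sortedd :: "real^'n::{finite,linorder} \<Rightarrow> bool" where
  "sortedd d \<longleftrightarrow> (\<forall>i j. i \<le> j \<longrightarrow> d $ j \<le> d $ i)"

definition permv :: "('n \<Rightarrow> 'n) \<Rightarrow> real^'n \<Rightarrow> real^'n" where
  "permv p d = (\<chi> k. d $ p k)"

lemma permv_nth[simp]: "permv p d $ k = d $ p k" by (simp add: permv_def)

lemma mmult_nth: "((A::'a::semiring_1^'n^'m) ** B) $ i $ j = (\<Sum>k\<in>UNIV. A $ i $ k * B $ k $ j)"
  by (simp add: matrix_matrix_mult_def)

definition pmat :: "('n \<Rightarrow> 'n) \<Rightarrow> complex^'n^'n" where
  "pmat p = (\<chi> i j. if i = p j then 1 else 0)"

lemma pmat_unitary: assumes "p permutes UNIV" shows "unitary (pmat p)"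
proof (rule unitaryI)
  have inj: "p a = p b \<longleftrightarrow> a = b" for a b using assms by (metis permutes_inj injD)
  have "(adj (pmat p) ** pmat p) $ a $ b = mat 1 $ a $ b" for a b
  proof -
    have "(adj (pmat p) ** pmat p) $ a $ b
       = (\<Sum>k\<in>UNIV. (if k = p a then 1 else 0) * (if k = p b then 1 else 0))"
      by (simp add: pmat_def matrix_matrix_mult_def if_distrib[of cnj] cong: if_cong)
    also have "\<dots> = (\<Sum>k\<in>UNIV. if k = p a then (if a = b then 1 else 0) else 0)"
      by (rule sum.cong) (auto simp: inj)
    finally show ?thesis by (simp add: mat_def)
  qed
  thus "adj (pmat p) ** pmat p = mat 1" by (simp add: vec_eq_iff)
qed

lemma pmat_conj: assumes "p permutes UNIV"
  shows "pmat p ** diagm (permv p d) ** adj (pmat p) = diagm d"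
proof -
  have inv: "p (inv p a) = a" for a using assms by (simp add: permutes_inverses)
  have inv2: "a = p k \<longleftrightarrow> k = inv p a" for a k using assms
    by (metis permutes_inverses(2) inv)
  have PD: "(pmat p ** diagm (permv p d)) $ a $ k = (if k = inv p a then of_real (d $ a) else 0)" for a k
  proof -
    have "(pmat p ** diagm (permv p d)) $ a $ k
       = (\<Sum>l\<in>UNIV. (if a = p l then 1 else 0) * (if l = k then complex_of_real (d $ p l) else 0))"
      by (simp add: pmat_def matrix_matrix_mult_def permv_def cong: if_cong)
    also have "\<dots> = (\<Sum>l\<in>UNIV. if l = k then (if a = p k then of_real (d $ a) else 0) else 0)"
      by (rule sum.cong) auto
    finally show ?thesis by (simp add: inv2)
  qed
  have "(pmat p ** diagm (permv p d) ** adj (pmat p)) $ a $ b = diagm d $ a $ b" for a b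
  proof -
    have "(pmat p ** diagm (permv p d) ** adj (pmat p)) $ a $ b
        = (\<Sum>k\<in>UNIV. (if k = inv p a then of_real (d $ a) else 0) * (if b = p k then 1 else 0))"
      by (subst mmult_nth) (simp only: PD, simp add: pmat_def if_distrib[of cnj] cong: if_cong)
    also have "\<dots> = (\<Sum>k\<in>UNIV. if k = inv p a then (if b = a then of_real (d $ a) else 0) else 0)"
      by (rule sum.cong) (auto simp: inv)
    finally show ?thesis by simp
  qed
  thus ?thesis by (simp add: vec_eq_iff)
qed

lemma conj_perm: assumes "p permutes UNIV"
  shows "U ** diagm d ** adj U = (U ** pmat p) ** diagm (permv p d) ** adj (U ** pmat p)"
proof -
  have "(U ** pmat p) ** diagm (permv p d) ** adj (U ** pmat p)
      = U ** (pmat p ** diagm (permv p d) ** adj (pmat p)) ** adj U"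
    by (simp add: adj_mult matrix_mul_assoc)
  thus ?thesis by (simp add: pmat_conj[OF assms])
qed

lemma permv_comp: "permv p (permv q d) = permv (q \<circ> p) d"
  by (simp add: vec_eq_iff)

lemma permv_id: "permv id d = d" by (simp add: vec_eq_iff)

lemma norm_permv: assumes "p permutes UNIV" shows "norm (permv p d) = norm d"
proof -
  have "(\<Sum>k\<in>UNIV. (d $ p k)\<^sup>2) = (\<Sum>k\<in>UNIV. (d $ k)\<^sup>2)"
    using sum.permute[OF assms, of "\<lambda>k. (d $ k)\<^sup>2"] by (simp add: comp_def)
  thus ?thesis by (simp add: norm_vec_def L2_set_def)
qed

lemma permv_diff: "permv p x - permv p y = permv p (x - y)"
  by (simp add: vec_eq_iff)

lemma exists_sorting: "\<exists>p. p permutes (UNIV::'n::{finite,linorder} set) \<and> sortedd (permv p d)"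
proof -
  define w :: "'n \<Rightarrow> real" where "w i = real (card {j. i < j})" for i
  have wlt: "w j < w i" if "i < j" for i j
  proof -
    have "{l. j < l} \<subset> {l. i < l}" using that by auto
    hence "card {l. j < l} < card {l. i < l}" by (intro psubset_card_mono) auto
    thus ?thesis by (simp add: w_def)
  qed
  define P where "P = {p. p permutes (UNIV::'n set)}"
  define \<phi> where "\<phi> p = (\<Sum>k\<in>UNIV. d $ p k * w k)" for p
  have fP: "finite P" unfolding P_def by (rule finite_permutations) simp
  have "id \<in> P" by (simp add: P_def permutes_id)
  hence ne: "\<phi> ` P \<noteq> {}" by blast
  have "Max (\<phi> ` P) \<in> \<phi> ` P" using fP ne by (intro Max_in) auto
  then obtain p where pP: "p \<in> P" and pmax: "\<phi> p = Max (\<phi> ` P)" by auto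
  have max: "\<phi> q \<le> \<phi> p" if "q \<in> P" for q using that fP pmax by (simp add: Max_ge)
  have "sortedd (permv p d)" unfolding sortedd_def
  proof (intro allI impI)
    fix i j :: 'n assume ij: "i \<le> j"
    show "permv p d $ j \<le> permv p d $ i"
    proof (rule ccontr)
      assume "\<not> ?thesis"
      hence lt: "d $ p i < d $ p j" by simp
      hence ne: "i \<noteq> j" by auto
      hence ij': "i < j" using ij by simp
      define q where "q = p \<circ> Transposition.transpose i j"
      have qP: "q \<in> P" using pP unfolding P_def q_def
        by (auto intro!: permutes_compose permutes_swap_id)
      have "\<phi> q - \<phi> p = (\<Sum>k\<in>UNIV. d $ q k * w k - d $ p k * w k)"
        by (simp add: \<phi>_def sum_subtractf)
      also have "\<dots> = (\<Sum>k\<in>{i,j}. d $ q k * w k - d $ p k * w k)"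
        by (rule sum.mono_neutral_right) (auto simp: q_def Transposition.transpose_def)
      also have "\<dots> = (d $ p j - d $ p i) * (w i - w j)"
        using ne by (simp add: q_def Transposition.transpose_def algebra_simps)
      also have "\<dots> > 0" using lt wlt[OF ij'] by simp
      finally show False using max[OF qP] by simp
    qed
  qed
  thus ?thesis using pP by (auto simp: P_def)
qed

lemma count_ge:
  fixes d :: "'a \<Rightarrow> real" and R :: "real set"
  assumes "finite (UNIV::'a set)" "finite R" "range d \<subseteq> R"
  shows "card {i. t \<le> d i} = (\<Sum>a\<in>R \<inter> {t..}. card {i. d i = a})"
proof -
  have "(\<Sum>a\<in>R \<inter> {t..}. sum (\<lambda>_. 1::nat) {i. i \<in> {i. t \<le> d i} \<and> d i = a}) = (\<Sum>i\<in>{i. t \<le> d i}. 1)"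
    by (rule sum.group) (use assms in \<open>auto intro: rev_finite_subset\<close>)
  hence "(\<Sum>a\<in>R \<inter> {t..}. card {i \<in> {i. t \<le> d i}. d i = a}) = (\<Sum>i\<in>{i. t \<le> d i}. 1)"
    by simp
  also have "\<dots> = card {i. t \<le> d i}" by simp
  finally have "card {i. t \<le> d i} = (\<Sum>a\<in>R \<inter> {t..}. card {i \<in> {i. t \<le> d i}. d i = a})" ..
  also have "\<dots> = (\<Sum>a\<in>R \<inter> {t..}. card {i. d i = a})"
    by (rule sum.cong) (auto intro!: arg_cong[where f=card])
  finally show ?thesis .
qed

lemma sorted_ge_iff:
  fixes d :: "real^'n::{finite,linorder}"
  assumes "sortedd d"
  shows "t \<le> d $ j \<longleftrightarrow> card {i. i \<le> j} \<le> card {i. t \<le> d $ i}"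
proof
  assume "t \<le> d $ j"
  hence "{i. i \<le> j} \<subseteq> {i. t \<le> d $ i}" using assms by (auto simp: sortedd_def intro: order_trans)
  thus "card {i. i \<le> j} \<le> card {i. t \<le> d $ i}" by (intro card_mono) auto
next
  assume c: "card {i. i \<le> j} \<le> card {i. t \<le> d $ i}"
  show "t \<le> d $ j"
  proof (rule ccontr)
    assume "\<not> t \<le> d $ j"
    hence "{i. t \<le> d $ i} \<subseteq> {i. i < j}" using assms
      by (auto simp: sortedd_def not_less) (meson leI order_trans)
    hence "card {i. t \<le> d $ i} \<le> card {i. i < j}" by (intro card_mono) auto
    also have "\<dots> < card {i. i \<le> j}" by (intro psubset_card_mono) auto
    finally show False using c by simp
  qed
qed

lemma sorted_unique:
  fixes d e :: "real^'n::{finite,linorder}"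
  assumes "sortedd d" "sortedd e" and cnt: "\<And>a. card {i. d $ i = a} = card {i. e $ i = a}"
  shows "d = e"
proof -
  define R where "R = range (\<lambda>i. d $ i) \<union> range (\<lambda>i. e $ i)"
  have fR: "finite R" by (simp add: R_def)
  have ge: "card {i. t \<le> d $ i} = card {i. t \<le> e $ i}" for t
  proof -
    have "card {i. t \<le> d $ i} = (\<Sum>a\<in>R \<inter> {t..}. card {i. d $ i = a})"
      by (rule count_ge[where d="\<lambda>i. d $ i"]) (auto simp: R_def fR)
    also have "\<dots> = (\<Sum>a\<in>R \<inter> {t..}. card {i. e $ i = a})" using cnt by simp
    also have "\<dots> = card {i. t \<le> e $ i}"
      by (rule count_ge[where d="\<lambda>i. e $ i", symmetric]) (auto simp: R_def fR)
    finally show ?thesis .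
  qed
  have "t \<le> d $ j \<longleftrightarrow> t \<le> e $ j" for t j
    using sorted_ge_iff[OF assms(1)] sorted_ge_iff[OF assms(2)] ge by metis
  hence "d $ j = e $ j" for j by (meson order_antisym order_refl)
  thus ?thesis by (simp add: vec_eq_iff)
qed


definition pm :: "complex^'n^'m \<Rightarrow> complex poly^'n^'m" where
  "pm M = (\<chi> i j. [:M $ i $ j:])"

definition pI :: "complex poly^'n^'n" where
  "pI = (\<chi> i j. if i = j then [:0, 1:] else 0)"

lemma charpoly_alt: "charpoly X = det (pI - pm X)"
  unfolding charpoly_def pI_def pm_def
  by (rule arg_cong[where f=det]) (simp add: vec_eq_iff)

lemma pm_mult: "pm (A ** B) = pm A ** pm (B :: complex^'k^'n)"
  by (simp add: vec_eq_iff pm_def matrix_matrix_mult_def sum_to_poly mult.commute)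

lemma pm_mat1: "pm (mat 1 :: complex^'n^'n) = mat 1"
  by (auto simp: vec_eq_iff pm_def mat_def)

lemma pI_comm: "pm U ** pI = pI ** pm (U :: complex^'n^'n)"
proof -
  have "(pm U ** pI) $ i $ j = (pI ** pm U) $ i $ j" for i j
  proof -
    have "(pm U ** pI) $ i $ j = (\<Sum>k\<in>UNIV. if k = j then [:U $ i $ k:] * [:0, 1:] else 0)"
      unfolding mmult_nth by (rule sum.cong) (auto simp: pm_def pI_def)
    also have "\<dots> = [:U $ i $ j:] * [:0, 1:]" by simp
    also have "\<dots> = (\<Sum>k\<in>UNIV. if k = i then [:0, 1:] * [:U $ k $ j:] else 0)" by (simp add: mult.commute)
    also have "\<dots> = (pI ** pm U) $ i $ j"
      unfolding mmult_nth by (rule sum.cong) (auto simp: pm_def pI_def)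
    finally show ?thesis .
  qed
  thus ?thesis by (simp add: vec_eq_iff)
qed

lemma pI_mat1: "pI ** mat 1 = (pI :: complex poly^'n^'n)"
  by simp

lemma charpoly_conj:
  assumes u: "unitary U"
  shows "charpoly (U ** diagm d ** adj U) = (\<Prod>i\<in>UNIV. [:- of_real (d $ i), 1:])"
proof -
  have UU: "U ** adj U = mat 1" using u by (simp add: unitary_def)
  have "pm U ** pI ** pm (adj U) = pI"
  proof -
    have "pm U ** pI ** pm (adj U) = pI ** (pm U ** pm (adj U))"
      by (simp add: pI_comm matrix_mul_assoc)
    also have "\<dots> = pI" by (simp add: pm_mult[symmetric] UU pm_mat1)
    finally show ?thesis .
  qed
  hence eq: "pI - pm (U ** diagm d ** adj U) = pm U ** (pI - pm (diagm d)) ** pm (adj U)"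
    by (simp add: mat_sub_ldistrib mat_sub_rdistrib pm_mult)
  have "det (pm U) * det (pm (adj U)) = 1"
    by (simp add: det_mul[symmetric] pm_mult[symmetric] UU pm_mat1)
  hence "charpoly (U ** diagm d ** adj U) = det (pI - pm (diagm d))"
    unfolding charpoly_alt eq det_mul by (simp add: algebra_simps)
  also have "\<dots> = (\<Prod>i\<in>UNIV. (pI - pm (diagm d)) $ i $ i)"
    by (rule det_diagonal) (simp add: pI_def pm_def)
  also have "\<dots> = (\<Prod>i\<in>UNIV. [:- of_real (d $ i), 1:])"
    by (simp add: pI_def pm_def)
  finally show ?thesis .
qed

lemma order_linear_prod:
  fixes c :: "'i \<Rightarrow> complex"
  assumes "finite A"
  shows "order a (\<Prod>i\<in>A. [:- c i, 1:]) = card {i\<in>A. c i = a}"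
  using assms
proof (induction A rule: finite_induct)
  case empty
  then show ?case by simp
next
  case (insert x F)
  have nz: "(\<Prod>i\<in>F. [:- c i, 1:]) \<noteq> 0" using insert.hyps(1) by (simp add: prod_zero_iff)
  have nz1: "[:- c x, 1:] \<noteq> 0" by simp
  have o1: "order a [:- c x, 1:] = (if c x = a then 1 else 0)"
  proof (cases "c x = a")
    case True
    then show ?thesis using order_power_n_n[of a 1] by simp
  next
    case False
    then show ?thesis by (intro order_0I[THEN trans]) auto
  qed
  have "order a (\<Prod>i\<in>insert x F. [:- c i, 1:]) = order a ([:- c x, 1:] * (\<Prod>i\<in>F. [:- c i, 1:]))"
    using insert.hyps by simp
  also have "\<dots> = order a [:- c x, 1:] + order a (\<Prod>i\<in>F. [:- c i, 1:])"
    by (rule order_mult) (use nz nz1 mult_eq_0_iff in blast)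
  also have "\<dots> = card {i\<in>insert x F. c i = a}"
  proof -
    have "{i\<in>insert x F. c i = a} = (if c x = a then insert x {i\<in>F. c i = a} else {i\<in>F. c i = a})"
      by auto
    thus ?thesis using o1 insert by simp
  qed
  finally show ?case .
qed

lemma eigvals_conj_sorted:
  fixes d :: "real^'n::{finite,linorder}"
  assumes u: "unitary U" and s: "sortedd d"
  shows "eigvals (U ** diagm d ** adj U) = d"
proof -
  have cnt: "order a (charpoly (U ** diagm d ** adj U)) = card {i. complex_of_real (d $ i) = a}" for a
    using order_linear_prod[of UNIV a "\<lambda>i. of_real (d $ i)"] by (simp add: charpoly_conj[OF u])
  show ?thesis unfolding eigvals_def
  proof (rule the_equality)
    show "(\<forall>i j. i \<le> j \<longrightarrow> d $ j \<le> d $ i) \<and>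
      (\<forall>a. card {i. complex_of_real (d $ i) = a} = order a (charpoly (U ** diagm d ** adj U)))"
      using s cnt by (simp add: sortedd_def)
  next
    fix e :: "real^'n::{finite,linorder}"
    assume e: "(\<forall>i j. i \<le> j \<longrightarrow> e $ j \<le> e $ i) \<and>
      (\<forall>a. card {i. complex_of_real (e $ i) = a} = order a (charpoly (U ** diagm d ** adj U)))"
    show "e = d"
    proof (rule sorted_unique)
      show "sortedd e" using e by (simp add: sortedd_def)
      show "sortedd d" by (rule s)
      fix x :: real
      have "card {i. e $ i = x} = card {i. complex_of_real (e $ i) = of_real x}" by simp
      also have "\<dots> = card {i. complex_of_real (d $ i) = of_real x}" using e cnt by metis
      also have "\<dots> = card {i. d $ i = x}" by simp
      finally show "card {i. e $ i = x} = card {i. d $ i = x}" .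
    qed
  qed
qed

lemma eigvals_conj:
  assumes u: "unitary U"
  shows "\<exists>p. p permutes UNIV \<and> sortedd (permv p d) \<and> eigvals (U ** diagm d ** adj U) = permv p d"
proof -
  obtain p where p: "p permutes UNIV" "sortedd (permv p d)" using exists_sorting by blast
  have "U ** diagm d ** adj U = (U ** pmat p) ** diagm (permv p d) ** adj (U ** pmat p)"
    by (rule conj_perm[OF p(1)])
  also have "eigvals \<dots> = permv p d"
    by (rule eigvals_conj_sorted[OF unitary_mult[OF u pmat_unitary[OF p(1)]] p(2)])
  finally show ?thesis using p by blast
qed

lemma spectral_sorted:
  assumes "hermitian X"
  shows "\<exists>U. unitary U \<and> X = U ** diagm (eigvals X) ** adj U"
proof -
  obtain U d where u: "unitary U" and X: "X = U ** diagm d ** adj U" using spectral[OF assms] by blast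
  obtain p where p: "p permutes UNIV" "sortedd (permv p d)" using exists_sorting by blast
  have X2: "X = (U ** pmat p) ** diagm (permv p d) ** adj (U ** pmat p)"
    using X conj_perm[OF p(1)] by simp
  have u2: "unitary (U ** pmat p)" by (rule unitary_mult[OF u pmat_unitary[OF p(1)]])
  have "eigvals X = permv p d" using X2 eigvals_conj_sorted[OF u2 p(2)] by simp
  thus ?thesis using X2 u2 by metis
qed

lemma eigvals_sorted: "hermitian X \<Longrightarrow> sortedd (eigvals X)"
  by (metis eigvals_conj spectral)


lemma sum_ind1: "(\<Sum>y\<in>UNIV. if P \<and> y = (c::'a::finite) then (r::real) else 0) = (if P then r else 0)"
  by (cases P) simp_all
lemma sum_ind2: "(\<Sum>x\<in>UNIV. if x = (c::'a::finite) \<and> Q then (r::real) else 0) = (if Q then r else 0)"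
  by (cases Q) simp_all

lemma sum_ind_diag: "(\<Sum>x\<in>UNIV. if x = a \<and> x = (b::'a::finite) then (1::real) else 0) = (if a = b then 1 else 0)"
proof (cases "a = b")
  case False
  hence eq: "(\<lambda>x. if x = a \<and> x = b then (1::real) else 0) = (\<lambda>x. 0)" by auto
  show ?thesis using False unfolding eq by simp
qed simp

lemma sum2_ind: "(\<Sum>x\<in>UNIV. \<Sum>y\<in>UNIV. (if x = c \<and> y = e then 1 else 0) * (f x y::real)) = f (c::'a::finite) (e::'b::finite)"
proof -
  have "(\<Sum>x\<in>UNIV. \<Sum>y\<in>UNIV. (if x = c \<and> y = e then 1 else 0) * f x y)
      = (\<Sum>x\<in>UNIV. \<Sum>y\<in>UNIV. if x = c then (if y = e then f x y else 0) else 0)"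
    by (intro sum.cong) auto
  also have "\<dots> = (\<Sum>x\<in>UNIV. if x = c then f x e else 0)"
    by (intro sum.cong) auto
  also have "\<dots> = f c e" by simp
  finally show ?thesis .
qed

lemma row_one_zero:
  fixes M :: "real^'n^'n"
  assumes nn: "\<forall>i j. 0 \<le> M $ i $ j" and row: "(\<Sum>l\<in>UNIV. M $ k $ l) = 1" and d: "M $ k $ k = 1"
    and l: "l \<noteq> k"
  shows "M $ k $ l = 0"
proof -
  have "(\<Sum>l\<in>UNIV. M $ k $ l) = M $ k $ k + (\<Sum>l\<in>UNIV - {k}. M $ k $ l)"
    by (simp add: sum.remove)
  hence s: "(\<Sum>l\<in>UNIV - {k}. M $ k $ l) = 0" using row d by simp
  have "M $ k $ l \<le> (\<Sum>l\<in>UNIV - {k}. M $ k $ l)"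
    by (rule member_le_sum) (use nn l in auto)
  thus ?thesis using s nn[rule_format, of k l] by linarith
qed

lemma col_one_zero:
  fixes M :: "real^'n^'n"
  assumes nn: "\<forall>i j. 0 \<le> M $ i $ j" and col: "(\<Sum>l\<in>UNIV. M $ l $ k) = 1" and d: "M $ k $ k = 1"
    and l: "l \<noteq> k"
  shows "M $ l $ k = 0"
proof -
  have "(\<Sum>l\<in>UNIV. M $ l $ k) = M $ k $ k + (\<Sum>l\<in>UNIV - {k}. M $ l $ k)"
    by (simp add: sum.remove)
  hence s: "(\<Sum>l\<in>UNIV - {k}. M $ l $ k) = 0" using col d by simp
  have "M $ l $ k \<le> (\<Sum>l\<in>UNIV - {k}. M $ l $ k)"
    by (rule member_le_sum) (use nn l in auto)
  thus ?thesis using s nn[rule_format, of l k] by linarith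
qed

lemma ds_ineq:
  fixes S :: "real^'n::{finite,linorder}^'n::{finite,linorder}" and a b :: "'n \<Rightarrow> real"
  assumes nn0: "\<forall>i j. 0 \<le> S $ i $ j"
    and rows0: "\<forall>i. (\<Sum>j\<in>UNIV. S $ i $ j) = 1"
    and cols0: "\<forall>j. (\<Sum>i\<in>UNIV. S $ i $ j) = 1"
    and sa: "\<forall>i j. i \<le> j \<longrightarrow> a j \<le> a i"
    and sb: "\<forall>i j. i \<le> j \<longrightarrow> b j \<le> b i"
  shows "(\<Sum>i\<in>UNIV. \<Sum>j\<in>UNIV. S $ i $ j * a i * b j) \<le> (\<Sum>i\<in>UNIV. a i * b i)"
proof -
  define \<phi> where "\<phi> M = (\<Sum>i\<in>UNIV. \<Sum>j\<in>UNIV. M $ i $ j * a i * b j)" for M :: "real^'n::{finite,linorder}^'n::{finite,linorder}"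
  define \<psi> where "\<psi> M = (\<Sum>i\<in>UNIV. M $ i $ i)" for M :: "real^'n::{finite,linorder}^'n::{finite,linorder}"
  define T where "T = {M :: real^'n::{finite,linorder}^'n::{finite,linorder}. (\<forall>i j. 0 \<le> M $ i $ j) \<and> (\<forall>i. (\<Sum>j\<in>UNIV. M $ i $ j) = 1)
      \<and> (\<forall>j. (\<Sum>i\<in>UNIV. M $ i $ j) = 1) \<and> \<phi> S \<le> \<phi> M}"
  have ST: "S \<in> T" using nn0 rows0 cols0 by (simp add: T_def)
  have "closed T" unfolding T_def \<phi>_def
    by (intro closed_Collect_conj closed_Collect_all closed_Collect_le closed_Collect_eq continuous_intros)
  moreover have "bounded T"
  proof -
    have "norm M \<le> real CARD('n)" if "M \<in> T" for M
    proof -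
      have "norm M \<le> (\<Sum>i\<in>UNIV. norm (M $ i))" unfolding norm_vec_def by (rule L2_set_le_sum) simp
      also have "\<dots> \<le> (\<Sum>i\<in>(UNIV::'n::{finite,linorder} set). (1::real))"
      proof (intro sum_mono)
        fix i
        have "norm (M $ i) \<le> (\<Sum>j\<in>UNIV. norm (M $ i $ j))" unfolding norm_vec_def by (rule L2_set_le_sum) simp
        also have "\<dots> = (\<Sum>j\<in>UNIV. M $ i $ j)" using that by (simp add: T_def)
        also have "\<dots> = 1" using that by (simp add: T_def)
        finally show "norm (M $ i) \<le> 1" .
      qed
      finally show ?thesis by simp
    qed
    thus ?thesis unfolding bounded_iff by blast
  qed
  ultimately have "compact T" by (simp add: compact_eq_bounded_closed)
  moreover have "continuous_on T \<psi>" unfolding \<psi>_def by (intro continuous_intros)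
  moreover have "T \<noteq> {}" using ST by blast
  ultimately obtain M where MT: "M \<in> T" and Mmax: "\<forall>N\<in>T. \<psi> N \<le> \<psi> M"
    using continuous_attains_sup by blast
  have nn: "\<forall>i j. 0 \<le> M $ i $ j" and rows: "\<forall>i. (\<Sum>j\<in>UNIV. M $ i $ j) = 1"
    and cols: "\<forall>j. (\<Sum>i\<in>UNIV. M $ i $ j) = 1" and \<phi>M: "\<phi> S \<le> \<phi> M"
    using MT by (auto simp: T_def)
  have diag1: "\<forall>i. M $ i $ i = 1"
  proof (rule ccontr)
    assume "\<not> ?thesis"
    hence ne: "{i. M $ i $ i \<noteq> 1} \<noteq> {}" by auto
    define i where "i = Min {i. M $ i $ i \<noteq> 1}"
    have i1: "M $ i $ i \<noteq> 1" using Min_in[OF _ ne] by (simp add: i_def)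
    have below: "M $ k $ k = 1" if "k < i" for k
    proof (rule ccontr)
      assume "M $ k $ k \<noteq> 1"
      hence "i \<le> k" unfolding i_def by (intro Min_le) auto
      thus False using that by simp
    qed
    have zr: "M $ k $ l = 0" if "k < i" "l \<noteq> k" for k l
      using row_one_zero[OF nn _ below[OF that(1)] that(2)] rows by simp
    have zc: "M $ l $ k = 0" if "k < i" "l \<noteq> k" for k l
      using col_one_zero[OF nn _ below[OF that(1)] that(2)] cols by simp
    have Mii: "M $ i $ i < 1"
    proof -
      have "M $ i $ i \<le> (\<Sum>j\<in>UNIV. M $ i $ j)" by (rule member_le_sum) (use nn in auto)
      thus ?thesis using rows i1 by (metis order_le_less)
    qed
    obtain j where ji: "j \<noteq> i" and Mij: "M $ i $ j > 0"
    proof -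
      have "(\<Sum>j\<in>UNIV. M $ i $ j) = M $ i $ i + (\<Sum>j\<in>UNIV - {i}. M $ i $ j)" by (simp add: sum.remove)
      hence "(\<Sum>j\<in>UNIV - {i}. M $ i $ j) > 0" using rows Mii by simp
      moreover have "(\<Sum>j\<in>UNIV - {i}. M $ i $ j) \<le> 0" if "\<forall>j\<in>UNIV - {i}. M $ i $ j \<le> 0"
        using that by (intro sum_nonpos) auto
      ultimately obtain j where "j \<in> UNIV - {i}" "M $ i $ j > 0" by (meson not_le)
      thus ?thesis using that by blast
    qed
    obtain k where ki: "k \<noteq> i" and Mki: "M $ k $ i > 0"
    proof -
      have "(\<Sum>k\<in>UNIV. M $ k $ i) = M $ i $ i + (\<Sum>k\<in>UNIV - {i}. M $ k $ i)" by (simp add: sum.remove)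
      hence "(\<Sum>k\<in>UNIV - {i}. M $ k $ i) > 0" using cols Mii by simp
      moreover have "(\<Sum>k\<in>UNIV - {i}. M $ k $ i) \<le> 0" if "\<forall>k\<in>UNIV - {i}. M $ k $ i \<le> 0"
        using that by (intro sum_nonpos) auto
      ultimately obtain k where "k \<in> UNIV - {i}" "M $ k $ i > 0" by (meson not_le)
      thus ?thesis using that by blast
    qed
    have ij: "i < j"
    proof (rule ccontr)
      assume "\<not> i < j" hence "j < i" using ji by simp
      hence "M $ i $ j = 0" using zc[of j i] ji by simp
      thus False using Mij by simp
    qed
    have ik: "i < k"
    proof (rule ccontr)
      assume "\<not> i < k" hence "k < i" using ki by simp
      hence "M $ k $ i = 0" using zr[of k i] ki by simp
      thus False using Mki by simp
    qed
    define \<epsilon> where "\<epsilon> = min (M $ i $ j) (M $ k $ i)"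
    have \<epsilon>: "\<epsilon> > 0" using Mij Mki by (simp add: \<epsilon>_def)
    define E :: "'n::{finite,linorder} \<Rightarrow> 'n \<Rightarrow> real" where "E x y = (if x = i \<and> y = i then 1 else 0)
       - (if x = i \<and> y = j then 1 else 0) - (if x = k \<and> y = i then 1 else 0)
       + (if x = k \<and> y = j then 1 else 0)" for x y
    define N where "N = (\<chi> x y. M $ x $ y + \<epsilon> * E x y)"
    have rowE: "(\<Sum>y\<in>UNIV. E x y) = 0" for x
      by (simp add: E_def sum.distrib sum_subtractf sum_ind1 ji)
    have colE: "(\<Sum>x\<in>UNIV. E x y) = 0" for y
      using ki by (simp add: E_def sum.distrib sum_subtractf sum_ind2)
    have "N \<in> T"
    proof -
      have "0 \<le> N $ x $ y" for x y
      proof -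
        have "(x = i \<and> y = j) \<or> (x = k \<and> y = i) \<or> E x y \<ge> 0"
          by (auto simp: E_def)
        moreover have "M $ i $ j + \<epsilon> * E i j \<ge> 0" using ji ki by (simp add: E_def \<epsilon>_def)
        moreover have "M $ k $ i + \<epsilon> * E k i \<ge> 0" using ji ki by (simp add: E_def \<epsilon>_def)
        moreover have "E x y \<ge> 0 \<Longrightarrow> M $ x $ y + \<epsilon> * E x y \<ge> 0" using nn \<epsilon> by (simp add: add_nonneg_nonneg)
        ultimately show ?thesis by (auto simp: N_def)
      qed
      moreover have "(\<Sum>y\<in>UNIV. N $ x $ y) = 1" for x
        using rows rowE by (simp add: N_def sum.distrib sum_distrib_left[symmetric])
      moreover have "(\<Sum>x\<in>UNIV. N $ x $ y) = 1" for y
        using cols colE by (simp add: N_def sum.distrib sum_distrib_left[symmetric])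
      moreover have "\<phi> M \<le> \<phi> N"
      proof -
        have eqN: "\<phi> N = \<phi> M + \<epsilon> * (\<Sum>x\<in>UNIV. \<Sum>y\<in>UNIV. E x y * a x * b y)"
          by (simp add: \<phi>_def N_def sum.distrib algebra_simps sum_distrib_left)
        have eqS: "(\<Sum>x\<in>UNIV. \<Sum>y\<in>UNIV. E x y * a x * b y) = (a i - a k) * (b i - b j)"
        proof -
          have Eexp: "E x y * a x * b y = (if x = i \<and> y = i then 1 else 0) * (a x * b y)
             - (if x = i \<and> y = j then 1 else 0) * (a x * b y) - (if x = k \<and> y = i then 1 else 0) * (a x * b y)
             + (if x = k \<and> y = j then 1 else 0) * (a x * b y)" for x y
            by (simp only: E_def ring_distribs mult.assoc)
          show ?thesis unfolding Eexp by (simp only: sum.distrib sum_subtractf sum2_ind) (simp add: algebra_simps)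
        qed
        have "(a i - a k) * (b i - b j) \<ge> 0"
          using sa sb ij ik by (simp add: less_imp_le)
        thus ?thesis using \<epsilon> eqN eqS by simp
      qed
      ultimately show ?thesis using \<phi>M by (auto simp: T_def)
    qed
    moreover have "\<psi> N > \<psi> M"
    proof -
      have "\<psi> N = \<psi> M + \<epsilon> * (\<Sum>x\<in>UNIV. E x x)"
        by (simp add: \<psi>_def N_def sum.distrib sum_distrib_left)
      also have "(\<Sum>x\<in>UNIV. E x x) = 1 + (if k = j then 1 else 0)"
        using ji ki by (simp add: E_def sum.distrib sum_subtractf sum_ind_diag)
      finally show ?thesis using \<epsilon> by simp
    qed
    ultimately show False using Mmax by fastforce
  qed
  have Mxy: "M $ x $ y = (if x = y then 1 else 0)" for x y
    using diag1 row_one_zero[OF nn _ diag1[rule_format, of x]] rows by auto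
  have "\<phi> M = (\<Sum>i\<in>UNIV. \<Sum>j\<in>UNIV. if j = i then a i * b j else 0)"
    unfolding \<phi>_def by (intro sum.cong) (auto simp: Mxy)
  hence "\<phi> M = (\<Sum>i\<in>UNIV. a i * b i)" by simp
  thus ?thesis using \<phi>M by (simp add: \<phi>_def)
qed


lemma diagm_mult_left: "(diagm a ** W) $ i $ j = of_real (a $ i) * W $ i $ j"
proof -
  have "(diagm a ** W) $ i $ j = (\<Sum>k\<in>UNIV. if k = i then of_real (a $ i) * W $ k $ j else 0)"
    unfolding mmult_nth by (rule sum.cong) auto
  thus ?thesis by simp
qed

lemma diagm_mult_right: "(W ** diagm b) $ i $ j = W $ i $ j * of_real (b $ j)"
proof -
  have "(W ** diagm b) $ i $ j = (\<Sum>k\<in>UNIV. if k = j then W $ i $ k * of_real (b $ j) else 0)"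
    unfolding mmult_nth by (rule sum.cong) auto
  thus ?thesis by simp
qed

lemma norm_rvec_sq: "(norm (x::real^'n))\<^sup>2 = (\<Sum>i\<in>UNIV. (x $ i)\<^sup>2)"
  by (simp add: norm_vec_def L2_set_def sum_nonneg)

lemma mult_cnj_self: "z * cnj z = complex_of_real ((cmod z)\<^sup>2)"
  using cnj_mult_self[of z] by (simp only: mult.commute)

lemma unitary_rows: assumes "unitary W" shows "(\<Sum>j\<in>UNIV. (cmod (W $ i $ j))\<^sup>2) = 1"
proof -
  have "(W ** adj W) $ i $ i = 1" using assms by (simp add: unitary_def mat_def)
  moreover have "(W ** adj W) $ i $ i = of_real (\<Sum>j\<in>UNIV. (cmod (W $ i $ j))\<^sup>2)"
    unfolding mmult_nth by (simp add: of_real_sum mult_cnj_self)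
  ultimately show ?thesis by (metis of_real_eq_1_iff)
qed

lemma unitary_cols: assumes "unitary W" shows "(\<Sum>i\<in>UNIV. (cmod (W $ i $ j))\<^sup>2) = 1"
proof -
  have "(adj W ** W) $ j $ j = 1" using assms by (simp add: unitary_def mat_def)
  moreover have "(adj W ** W) $ j $ j = of_real (\<Sum>i\<in>UNIV. (cmod (W $ i $ j))\<^sup>2)"
    unfolding mmult_nth by (simp add: of_real_sum cnj_mult_self)
  ultimately show ?thesis by (metis of_real_eq_1_iff)
qed

lemma HW_diag:
  fixes a b :: "real^'n::{finite,linorder}" and W :: "complex^'n::{finite,linorder}^'n::{finite,linorder}"
  assumes w: "unitary W" and sa: "sortedd a" and sb: "sortedd b"
  shows "norm (a - b) \<le> norm (diagm a ** W - W ** diagm b)"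
proof -
  define S :: "real^'n::{finite,linorder}^'n::{finite,linorder}" where "S = (\<chi> i j. (cmod (W $ i $ j))\<^sup>2)"
  have nn: "\<forall>i j. 0 \<le> S $ i $ j" by (simp add: S_def)
  have rows: "\<forall>i. (\<Sum>j\<in>UNIV. S $ i $ j) = 1" using unitary_rows[OF w] by (simp add: S_def)
  have cols: "\<forall>j. (\<Sum>i\<in>UNIV. S $ i $ j) = 1" using unitary_cols[OF w] by (simp add: S_def)
  have ds: "(\<Sum>i\<in>UNIV. \<Sum>j\<in>UNIV. S $ i $ j * a $ i * b $ j) \<le> (\<Sum>i\<in>UNIV. a $ i * b $ i)"
    by (rule ds_ineq[OF nn rows cols]) (use sa sb in \<open>auto simp: sortedd_def\<close>)
  have "(norm (diagm a ** W - W ** diagm b))\<^sup>2 = (\<Sum>i\<in>UNIV. \<Sum>j\<in>UNIV. S $ i $ j * (a $ i - b $ j)\<^sup>2)"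
    unfolding norm_mat_sq
  proof (intro sum.cong refl)
    fix i j
    have "(diagm a ** W - W ** diagm b) $ i $ j = W $ i $ j * of_real (a $ i - b $ j)"
      by (simp add: diagm_mult_left diagm_mult_right algebra_simps)
    thus "(cmod ((diagm a ** W - W ** diagm b) $ i $ j))\<^sup>2 = S $ i $ j * (a $ i - b $ j)\<^sup>2"
      by (simp add: S_def norm_mult power_mult_distrib del: of_real_diff)
  qed
  also have "\<dots> = (\<Sum>i\<in>UNIV. \<Sum>j\<in>UNIV. S $ i $ j * (a $ i)\<^sup>2) + (\<Sum>i\<in>UNIV. \<Sum>j\<in>UNIV. S $ i $ j * (b $ j)\<^sup>2)
      - 2 * (\<Sum>i\<in>UNIV. \<Sum>j\<in>UNIV. S $ i $ j * a $ i * b $ j)"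
    by (simp add: power2_diff algebra_simps sum.distrib sum_subtractf sum_distrib_left)
  also have "(\<Sum>i\<in>UNIV. \<Sum>j\<in>UNIV. S $ i $ j * (a $ i)\<^sup>2) = (\<Sum>i\<in>UNIV. (a $ i)\<^sup>2)"
    using rows by (simp add: sum_distrib_right[symmetric])
  also have "(\<Sum>i\<in>UNIV. \<Sum>j\<in>UNIV. S $ i $ j * (b $ j)\<^sup>2) = (\<Sum>j\<in>UNIV. (b $ j)\<^sup>2)"
    using cols by (subst sum.swap) (simp add: sum_distrib_right[symmetric])
  finally have eq: "(norm (diagm a ** W - W ** diagm b))\<^sup>2 = (\<Sum>i\<in>UNIV. (a $ i)\<^sup>2) + (\<Sum>j\<in>UNIV. (b $ j)\<^sup>2)
      - 2 * (\<Sum>i\<in>UNIV. \<Sum>j\<in>UNIV. S $ i $ j * a $ i * b $ j)" .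
  have "(norm (a - b))\<^sup>2 = (\<Sum>i\<in>UNIV. (a $ i)\<^sup>2) + (\<Sum>j\<in>UNIV. (b $ j)\<^sup>2) - 2 * (\<Sum>i\<in>UNIV. a $ i * b $ i)"
    unfolding norm_rvec_sq by (simp add: power2_diff sum.distrib sum_subtractf sum_distrib_left algebra_simps)
  also have "\<dots> \<le> (norm (diagm a ** W - W ** diagm b))\<^sup>2" using eq ds by simp
  finally show ?thesis by (rule power2_le_imp_le) simp
qed

theorem HW:
  fixes A B :: "complex^'n::{finite,linorder}^'n::{finite,linorder}"
  assumes "hermitian A" "hermitian B"
  shows "norm (eigvals A - eigvals B) \<le> norm (A - B)"
proof -
  obtain U where u: "unitary U" and A: "A = U ** diagm (eigvals A) ** adj U" using spectral_sorted[OF assms(1)] by blast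
  obtain V where v: "unitary V" and B: "B = V ** diagm (eigvals B) ** adj V" using spectral_sorted[OF assms(2)] by blast
  define W where "W = adj U ** V"
  have w: "unitary W" unfolding W_def by (intro unitary_mult unitary_adj u v)
  have UU: "adj U ** U = mat 1" and VV: "adj V ** V = mat 1" using u v by (auto simp: unitary_def)
  have "adj U ** A ** V = diagm (eigvals A) ** W"
    by (subst A) (simp add: W_def matrix_mul_assoc UU)
  moreover have "adj U ** B ** V = W ** diagm (eigvals B)"
  proof -
    have "adj U ** B ** V = (adj U ** V) ** diagm (eigvals B) ** (adj V ** V)"
      by (subst B) (simp add: matrix_mul_assoc)
    thus ?thesis by (simp add: W_def VV)
  qed
  ultimately have "adj U ** (A - B) ** V = diagm (eigvals A) ** W - W ** diagm (eigvals B)"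
    by (simp add: mat_sub_ldistrib mat_sub_rdistrib)
  moreover have "norm (adj U ** (A - B) ** V) = norm (A - B)"
    by (simp add: unitary_norm_left unitary_norm_right unitary_adj u v)
  ultimately have "norm (A - B) = norm (diagm (eigvals A) ** W - W ** diagm (eigvals B))" by simp
  thus ?thesis using HW_diag[OF w eigvals_sorted[OF assms(1)] eigvals_sorted[OF assms(2)]] by simp
qed


lemma mid_norm:
  fixes a b y :: "'a::real_inner"
  shows "(norm ((1/2) *\<^sub>R (a + b) - y))\<^sup>2
     = (norm (a - y))\<^sup>2 / 2 + (norm (b - y))\<^sup>2 / 2 - (norm (a - b))\<^sup>2 / 4"
  by (simp add: power2_norm_eq_inner inner_diff_left inner_diff_right inner_add_left
      inner_add_right inner_commute algebra_simps) (simp add: field_simps)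

lemma qenv_upper:
  assumes "y \<in> S" "\<forall>z\<in>S. ereal (\<alpha> - \<gamma> / 2 * (norm (z - y))\<^sup>2) \<le> g z"
  shows "ereal (\<alpha> - \<gamma> / 2 * (norm (x - y))\<^sup>2) \<le> qenv S \<gamma> g x"
  unfolding qenv_def by (rule Sup_upper) (use assms in blast)

lemma qenv_le: assumes "x \<in> S" shows "qenv S \<gamma> g x \<le> g x"
  unfolding qenv_def using assms by (auto intro!: Sup_least)

lemma qenv_nonneg:
  assumes "x \<in> S" "\<forall>z\<in>S. 0 \<le> g z" "\<gamma> \<ge> 0"
  shows "0 \<le> qenv S \<gamma> g x"
proof -
  have "ereal (0 - \<gamma> / 2 * (norm (x - x))\<^sup>2) \<le> qenv S \<gamma> g x"
  proof (rule qenv_upper)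
    show "x \<in> S" by fact
    show "\<forall>z\<in>S. ereal (0 - \<gamma> / 2 * (norm (z - x))\<^sup>2) \<le> g z"
    proof
      fix z assume "z \<in> S"
      have "ereal (0 - \<gamma> / 2 * (norm (z - x))\<^sup>2) \<le> 0" using assms(3) by simp
      also have "\<dots> \<le> g z" using assms(2) \<open>z \<in> S\<close> by simp
      finally show "ereal (0 - \<gamma> / 2 * (norm (z - x))\<^sup>2) \<le> g z" .
    qed
  qed
  thus ?thesis by (simp add: zero_ereal_def)
qed

lemma qenv_mid:
  fixes S :: "'a::real_inner set"
  assumes "qenv S \<gamma> g a = ereal qa" "qenv S \<gamma> g b = ereal qb" "\<gamma> \<ge> 0"
  shows "qenv S \<gamma> g ((1/2) *\<^sub>R (a + b)) \<le> ereal (qa / 2 + qb / 2 + \<gamma> / 8 * (norm (a - b))\<^sup>2)"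
  unfolding qenv_def
proof (rule Sup_least)
  fix e assume "e \<in> {ereal (\<alpha> - \<gamma> / 2 * (norm ((1/2) *\<^sub>R (a + b) - y))\<^sup>2) |\<alpha> y.
             y \<in> S \<and> (\<forall>z\<in>S. ereal (\<alpha> - \<gamma> / 2 * (norm (z - y))\<^sup>2) \<le> g z)}"
  then obtain \<alpha> y where e: "e = ereal (\<alpha> - \<gamma> / 2 * (norm ((1/2) *\<^sub>R (a + b) - y))\<^sup>2)"
    and y: "y \<in> S" and m: "\<forall>z\<in>S. ereal (\<alpha> - \<gamma> / 2 * (norm (z - y))\<^sup>2) \<le> g z" by blast
  have "ereal (\<alpha> - \<gamma> / 2 * (norm (a - y))\<^sup>2) \<le> ereal qa"
    using qenv_upper[OF y m, of a] assms(1) by simp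
  hence ha: "\<alpha> - \<gamma> / 2 * (norm (a - y))\<^sup>2 \<le> qa" by simp
  have "ereal (\<alpha> - \<gamma> / 2 * (norm (b - y))\<^sup>2) \<le> ereal qb"
    using qenv_upper[OF y m, of b] assms(2) by simp
  hence hb: "\<alpha> - \<gamma> / 2 * (norm (b - y))\<^sup>2 \<le> qb" by simp
  have "\<alpha> - \<gamma> / 2 * (norm ((1/2) *\<^sub>R (a + b) - y))\<^sup>2
      = (\<alpha> - \<gamma> / 2 * (norm (a - y))\<^sup>2) / 2 + (\<alpha> - \<gamma> / 2 * (norm (b - y))\<^sup>2) / 2
        + \<gamma> / 8 * (norm (a - b))\<^sup>2"
    by (simp only: mid_norm) (simp add: field_simps)
  also have "\<dots> \<le> qa / 2 + qb / 2 + \<gamma> / 8 * (norm (a - b))\<^sup>2" using ha hb by (intro add_mono divide_right_mono order_refl) auto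
  finally show "e \<le> ereal (qa / 2 + qb / 2 + \<gamma> / 8 * (norm (a - b))\<^sup>2)" using e by simp
qed

lemma prox_unique:
  fixes S :: "'a::real_inner set"
  assumes mid: "\<forall>a\<in>S. \<forall>b\<in>S. (1/2) *\<^sub>R (a + b) \<in> S"
    and gnn: "\<forall>z\<in>S. 0 \<le> g z" and \<gamma>: "\<gamma> > 0" and \<rho>: "\<rho> > \<gamma>"
    and fin: "\<exists>z\<in>S. qenv S \<gamma> g z < \<infinity>"
    and v1: "v1 \<in> prox S (qenv S \<gamma> g) \<rho> w" and v2: "v2 \<in> prox S (qenv S \<gamma> g) \<rho> w"
  shows "v1 = v2"
proof -
  let ?Q = "qenv S \<gamma> g"
  define \<Phi> where "\<Phi> z = ?Q z / ereal \<rho> + ereal ((norm (z - w))\<^sup>2 / 2)" for z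
  have v1S: "v1 \<in> S" and v1m: "\<forall>u\<in>S. \<Phi> v1 \<le> \<Phi> u" using v1 by (auto simp: prox_def \<Phi>_def)
  have v2S: "v2 \<in> S" and v2m: "\<forall>u\<in>S. \<Phi> v2 \<le> \<Phi> u" using v2 by (auto simp: prox_def \<Phi>_def)
  have \<rho>0: "\<rho> > 0" using \<gamma> \<rho> by simp
  have Qnn: "0 \<le> ?Q z" if "z \<in> S" for z using qenv_nonneg[OF that gnn] \<gamma> by simp
  obtain z0 where z0: "z0 \<in> S" "?Q z0 < \<infinity>" using fin by blast
  have fin1: "?Q v \<noteq> \<infinity>" if "v \<in> S" "\<forall>u\<in>S. \<Phi> v \<le> \<Phi> u" for v
  proof
    assume "?Q v = \<infinity>"
    hence "\<Phi> v = \<infinity>" using \<rho>0 by (simp add: \<Phi>_def)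
    moreover have "\<Phi> z0 < \<infinity>"
    proof -
      obtain q where "?Q z0 = ereal q" using z0 Qnn[OF z0(1)] by (cases "?Q z0") auto
      thus ?thesis using \<rho>0 by (simp add: \<Phi>_def)
    qed
    ultimately show False using that(2) z0(1) by (metis not_less)
  qed
  obtain q1 where q1: "?Q v1 = ereal q1" using fin1[OF v1S v1m] Qnn[OF v1S] by (cases "?Q v1") auto
  obtain q2 where q2: "?Q v2 = ereal q2" using fin1[OF v2S v2m] Qnn[OF v2S] by (cases "?Q v2") auto
  define M where "M = (1/2) *\<^sub>R (v1 + v2)"
  have MS: "M \<in> S" using mid v1S v2S by (simp add: M_def)
  define d where "d = (norm (v1 - v2))\<^sup>2"
  have QM: "?Q M \<le> ereal (q1 / 2 + q2 / 2 + \<gamma> / 8 * d)"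
    unfolding M_def d_def by (rule qenv_mid[OF q1 q2]) (use \<gamma> in simp)
  obtain qM where qM: "?Q M = ereal qM" using QM Qnn[OF MS] by (cases "?Q M") auto
  have qMle: "qM \<le> q1 / 2 + q2 / 2 + \<gamma> / 8 * d" using QM qM by simp
  define n1 where "n1 = (norm (v1 - w))\<^sup>2"
  define n2 where "n2 = (norm (v2 - w))\<^sup>2"
  have \<Phi>1: "\<Phi> v1 = ereal (q1 / \<rho> + n1 / 2)" using \<rho>0 by (simp add: \<Phi>_def q1 n1_def)
  have \<Phi>2: "\<Phi> v2 = ereal (q2 / \<rho> + n2 / 2)" using \<rho>0 by (simp add: \<Phi>_def q2 n2_def)
  have nM: "(norm (M - w))\<^sup>2 = n1 / 2 + n2 / 2 - d / 4"
    unfolding M_def n1_def n2_def d_def by (rule mid_norm)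
  have \<Phi>M: "\<Phi> M = ereal (qM / \<rho> + (n1 / 2 + n2 / 2 - d / 4) / 2)" using \<rho>0 by (simp add: \<Phi>_def qM nM)
  have "\<Phi> v1 \<le> \<Phi> v2" using v1m v2S by blast
  hence e12: "q1 / \<rho> + n1 / 2 \<le> q2 / \<rho> + n2 / 2" by (simp only: \<Phi>1 \<Phi>2 ereal_less_eq)
  have "\<Phi> v2 \<le> \<Phi> v1" using v2m v1S by blast
  hence e21: "q2 / \<rho> + n2 / 2 \<le> q1 / \<rho> + n1 / 2" by (simp only: \<Phi>1 \<Phi>2 ereal_less_eq)
  have "\<Phi> v1 \<le> \<Phi> M" using v1m MS by blast
  hence e1M: "q1 / \<rho> + n1 / 2 \<le> qM / \<rho> + (n1 / 2 + n2 / 2 - d / 4) / 2" by (simp only: \<Phi>1 \<Phi>M ereal_less_eq)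
  have "qM / \<rho> \<le> (q1 / 2 + q2 / 2 + \<gamma> / 8 * d) / \<rho>" using qMle \<rho>0 by (simp add: divide_right_mono)
  hence "q1 / \<rho> + n1 / 2 \<le> (q1 / 2 + q2 / 2 + \<gamma> / 8 * d) / \<rho> + (n1 / 2 + n2 / 2 - d / 4) / 2"
    using e1M by linarith
  hence "0 \<le> (\<gamma> / 8 * d) / \<rho> - d / 8"
    using e12 e21 by (simp add: add_divide_distrib diff_divide_distrib)
  hence "d / 8 \<le> (\<gamma> / \<rho>) * (d / 8)" by (simp add: field_simps)
  moreover have "\<gamma> / \<rho> < 1" using \<rho> \<rho>0 by simp
  moreover have "d \<ge> 0" by (simp add: d_def)
  ultimately have "d \<le> 0"
  proof -
    assume a1: "d / 8 \<le> (\<gamma> / \<rho>) * (d / 8)" and a2: "\<gamma> / \<rho> < 1"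
    show "d \<le> 0"
    proof (rule ccontr)
      assume "\<not> d \<le> 0"
      hence "d / 8 > 0" by simp
      hence "(\<gamma> / \<rho>) * (d / 8) < 1 * (d / 8)" using a2 by (intro mult_strict_right_mono)
      thus False using a1 by simp
    qed
  qed
  hence "d = 0" using \<open>d \<ge> 0\<close> by simp
  thus ?thesis by (simp add: d_def)
qed


lemma sym_permv: "symmetric_fun f \<Longrightarrow> p permutes UNIV \<Longrightarrow> f (permv p x) = f x"
  unfolding symmetric_fun_def permv_def by blast

lemma permv_inv_cancel: assumes "p permutes UNIV"
  shows "permv p (permv (inv p) y) = y" "permv (inv p) (permv p y) = y"
  using permutes_inv_o[OF assms] by (simp_all add: permv_comp permv_id)

lemma perm_norm_shift: assumes "p permutes UNIV"
  shows "norm (z - permv (inv p) y) = norm (permv p z - y)"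
proof -
  have "permv p z - y = permv p (z - permv (inv p) y)"
    using permv_inv_cancel(1)[OF assms, of y] by (metis permv_diff)
  thus ?thesis using norm_permv[OF assms] by simp
qed

lemma f_conj: assumes "symmetric_fun f" "unitary U"
  shows "f (eigvals (U ** diagm d ** adj U)) = f d"
  using eigvals_conj[OF assms(2), of d] sym_permv[OF assms(1)] by metis

lemma Herm_iff: "X \<in> Herm \<longleftrightarrow> hermitian X" by (simp add: Herm_def)

lemma Herm_mid: "a \<in> Herm \<Longrightarrow> b \<in> Herm \<Longrightarrow> (1/2) *\<^sub>R (a + b) \<in> Herm"
  by (simp add: Herm_def hermitian_def adj_scaleR adj_add)

lemma unitary_one: "unitary (mat 1 :: complex^'n^'n)"
  by (simp add: unitary_def)

lemma sq_mono_neg: assumes "0 \<le> s" "s \<le> t" "\<gamma> > 0"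
  shows "ereal (\<alpha> - \<gamma> / 2 * t\<^sup>2) \<le> ereal (\<alpha> - \<gamma> / 2 * s\<^sup>2)"
proof -
  have "s\<^sup>2 \<le> t\<^sup>2" using assms by (intro power_mono) auto
  thus ?thesis using assms(3) by simp
qed

lemma part1:
  fixes f :: "real^'n::{finite,linorder} \<Rightarrow> ereal" and X :: "complex^'n::{finite,linorder}^'n::{finite,linorder}"
  assumes sym: "symmetric_fun f" and \<gamma>: "\<gamma> > 0" and X: "X \<in> Herm"
  shows "qenv Herm \<gamma> (\<lambda>X. f (eigvals X)) X = qenv UNIV \<gamma> f (eigvals X)"
  unfolding qenv_def
proof (rule antisym)
  have hX: "hermitian X" using X by (simp add: Herm_def)
  show "Sup {ereal (\<alpha> - \<gamma> / 2 * (norm (X - y))\<^sup>2) |\<alpha> y.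
        y \<in> Herm \<and> (\<forall>z\<in>Herm. ereal (\<alpha> - \<gamma> / 2 * (norm (z - y))\<^sup>2) \<le> f (eigvals z))}
     \<le> Sup {ereal (\<alpha> - \<gamma> / 2 * (norm (eigvals X - y))\<^sup>2) |\<alpha> y.
        y \<in> UNIV \<and> (\<forall>z\<in>UNIV. ereal (\<alpha> - \<gamma> / 2 * (norm (z - y))\<^sup>2) \<le> f z)}"
  proof (rule Sup_mono, clarify)
    fix \<alpha> Y
    assume Y: "Y \<in> Herm" and m: "\<forall>z\<in>Herm. ereal (\<alpha> - \<gamma> / 2 * (norm (z - Y))\<^sup>2) \<le> f (eigvals z)"
    have hY: "hermitian Y" using Y by (simp add: Herm_def)
    obtain V where v: "unitary V" and Yd: "Y = V ** diagm (eigvals Y) ** adj V"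
      using spectral_sorted[OF hY] by blast
    have mm: "\<forall>z. ereal (\<alpha> - \<gamma> / 2 * (norm (z - eigvals Y))\<^sup>2) \<le> f z"
    proof
      fix z
      have "ereal (\<alpha> - \<gamma> / 2 * (norm (V ** diagm z ** adj V - Y))\<^sup>2) \<le> f (eigvals (V ** diagm z ** adj V))"
        using m Herm_conj by blast
      moreover have "norm (V ** diagm z ** adj V - Y) = norm (z - eigvals Y)"
        by (subst Yd) (rule norm_conj_diff[OF v])
      ultimately show "ereal (\<alpha> - \<gamma> / 2 * (norm (z - eigvals Y))\<^sup>2) \<le> f z"
        using f_conj[OF sym v] by simp
    qed
    have "ereal (\<alpha> - \<gamma> / 2 * (norm (X - Y))\<^sup>2) \<le> ereal (\<alpha> - \<gamma> / 2 * (norm (eigvals X - eigvals Y))\<^sup>2)"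
      by (rule sq_mono_neg[OF _ HW[OF hX hY] \<gamma>]) simp
    thus "\<exists>b\<in>{ereal (\<alpha> - \<gamma> / 2 * (norm (eigvals X - y))\<^sup>2) |\<alpha> y.
        y \<in> UNIV \<and> (\<forall>z\<in>UNIV. ereal (\<alpha> - \<gamma> / 2 * (norm (z - y))\<^sup>2) \<le> f z)}.
          ereal (\<alpha> - \<gamma> / 2 * (norm (X - Y))\<^sup>2) \<le> b"
      using mm by (intro bexI[where x="ereal (\<alpha> - \<gamma> / 2 * (norm (eigvals X - eigvals Y))\<^sup>2)"]) auto
  qed
next
  have hX: "hermitian X" using X by (simp add: Herm_def)
  obtain U where u: "unitary U" and Xd: "X = U ** diagm (eigvals X) ** adj U"
    using spectral_sorted[OF hX] by blast
  show "Sup {ereal (\<alpha> - \<gamma> / 2 * (norm (eigvals X - y))\<^sup>2) |\<alpha> y.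
        y \<in> UNIV \<and> (\<forall>z\<in>UNIV. ereal (\<alpha> - \<gamma> / 2 * (norm (z - y))\<^sup>2) \<le> f z)}
     \<le> Sup {ereal (\<alpha> - \<gamma> / 2 * (norm (X - y))\<^sup>2) |\<alpha> y.
        y \<in> Herm \<and> (\<forall>z\<in>Herm. ereal (\<alpha> - \<gamma> / 2 * (norm (z - y))\<^sup>2) \<le> f (eigvals z))}"
  proof (rule Sup_mono, clarify)
    fix \<alpha> y
    assume m: "\<forall>z\<in>UNIV. ereal (\<alpha> - \<gamma> / 2 * (norm (z - y))\<^sup>2) \<le> f z"
    define Y where "Y = U ** diagm y ** adj U"
    have YH: "Y \<in> Herm" by (simp add: Y_def Herm_conj)
    hence hY: "hermitian Y" by (simp add: Herm_def)
    obtain p where p: "p permutes UNIV" and eY: "eigvals Y = permv p y"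
      using eigvals_conj[OF u, of y] by (auto simp: Y_def)
    have mm: "\<forall>Z\<in>Herm. ereal (\<alpha> - \<gamma> / 2 * (norm (Z - Y))\<^sup>2) \<le> f (eigvals Z)"
    proof
      fix Z :: "complex^'n::{finite,linorder}^'n::{finite,linorder}" assume Z: "Z \<in> Herm"
      hence hZ: "hermitian Z" by (simp add: Herm_def)
      define z' where "z' = permv (inv p) (eigvals Z)"
      have pi: "inv p permutes UNIV" using p by (rule permutes_inv)
      have "norm (z' - y) = norm (eigvals Z - permv p y)"
      proof -
        have "z' - y = permv (inv p) (eigvals Z - permv p y)"
          using permv_inv_cancel(2)[OF p, of y] by (simp add: z'_def permv_diff[symmetric])
        thus ?thesis using norm_permv[OF pi] by simp
      qed
      also have "\<dots> \<le> norm (Z - Y)" using HW[OF hZ hY] eY by simp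
      finally have "ereal (\<alpha> - \<gamma> / 2 * (norm (Z - Y))\<^sup>2) \<le> ereal (\<alpha> - \<gamma> / 2 * (norm (z' - y))\<^sup>2)"
        by (intro sq_mono_neg \<gamma>) simp
      also have "\<dots> \<le> f z'" using m by simp
      also have "\<dots> = f (eigvals Z)" unfolding z'_def by (rule sym_permv[OF sym pi])
      finally show "ereal (\<alpha> - \<gamma> / 2 * (norm (Z - Y))\<^sup>2) \<le> f (eigvals Z)" .
    qed
    have "norm (X - Y) = norm (eigvals X - y)"
      unfolding Y_def by (subst Xd) (rule norm_conj_diff[OF u])
    show "\<exists>b\<in>{ereal (\<alpha> - \<gamma> / 2 * (norm (X - y))\<^sup>2) |\<alpha> y.
        y \<in> Herm \<and> (\<forall>z\<in>Herm. ereal (\<alpha> - \<gamma> / 2 * (norm (z - y))\<^sup>2) \<le> f (eigvals z))}.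
          ereal (\<alpha> - \<gamma> / 2 * (norm (eigvals X - y))\<^sup>2) \<le> b"
    proof (rule bexI)
      show "ereal (\<alpha> - \<gamma> / 2 * (norm (X - Y))\<^sup>2) \<in> {ereal (\<alpha> - \<gamma> / 2 * (norm (X - y))\<^sup>2) |\<alpha> y.
        y \<in> Herm \<and> (\<forall>z\<in>Herm. ereal (\<alpha> - \<gamma> / 2 * (norm (z - y))\<^sup>2) \<le> f (eigvals z))}"
        using YH mm by blast
      show "ereal (\<alpha> - \<gamma> / 2 * (norm (eigvals X - y))\<^sup>2) \<le> ereal (\<alpha> - \<gamma> / 2 * (norm (X - Y))\<^sup>2)"
        using \<open>norm (X - Y) = norm (eigvals X - y)\<close> by simp
    qed
  qed
qed

lemma qenv_sym_le:
  fixes f :: "real^'n::{finite,linorder} \<Rightarrow> ereal"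
  assumes sym: "symmetric_fun f" and p: "p permutes UNIV"
  shows "qenv UNIV \<gamma> f (permv p v) \<le> qenv UNIV \<gamma> f v"
  unfolding qenv_def
proof (rule Sup_mono, clarify)
  fix \<alpha> y
  assume m: "\<forall>z\<in>UNIV. ereal (\<alpha> - \<gamma> / 2 * (norm (z - y))\<^sup>2) \<le> f z"
  define y' where "y' = permv (inv p) y"
  have mm: "\<forall>z\<in>UNIV. ereal (\<alpha> - \<gamma> / 2 * (norm (z - y'))\<^sup>2) \<le> f z"
  proof
    fix z
    have "ereal (\<alpha> - \<gamma> / 2 * (norm (z - y'))\<^sup>2) = ereal (\<alpha> - \<gamma> / 2 * (norm (permv p z - y))\<^sup>2)"
      by (simp add: y'_def perm_norm_shift[OF p])
    also have "\<dots> \<le> f (permv p z)" using m by simp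
    also have "\<dots> = f z" by (rule sym_permv[OF sym p])
    finally show "ereal (\<alpha> - \<gamma> / 2 * (norm (z - y'))\<^sup>2) \<le> f z" .
  qed
  have "ereal (\<alpha> - \<gamma> / 2 * (norm (permv p v - y))\<^sup>2) = ereal (\<alpha> - \<gamma> / 2 * (norm (v - y'))\<^sup>2)"
    by (simp add: y'_def perm_norm_shift[OF p])
  thus "\<exists>b\<in>{ereal (\<alpha> - \<gamma> / 2 * (norm (v - y))\<^sup>2) |\<alpha> y.
        y \<in> UNIV \<and> (\<forall>z\<in>UNIV. ereal (\<alpha> - \<gamma> / 2 * (norm (z - y))\<^sup>2) \<le> f z)}.
          ereal (\<alpha> - \<gamma> / 2 * (norm (permv p v - y))\<^sup>2) \<le> b"
    using mm by (intro bexI[where x="ereal (\<alpha> - \<gamma> / 2 * (norm (v - y'))\<^sup>2)"]) auto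
qed

lemma qenv_sym:
  fixes f :: "real^'n::{finite,linorder} \<Rightarrow> ereal"
  assumes sym: "symmetric_fun f" and p: "p permutes UNIV"
  shows "qenv UNIV \<gamma> f (permv p v) = qenv UNIV \<gamma> f v"
proof (rule antisym)
  show "qenv UNIV \<gamma> f (permv p v) \<le> qenv UNIV \<gamma> f v" by (rule qenv_sym_le[OF sym p])
  have "qenv UNIV \<gamma> f (permv (inv p) (permv p v)) \<le> qenv UNIV \<gamma> f (permv p v)"
    by (rule qenv_sym_le[OF sym permutes_inv[OF p]])
  thus "qenv UNIV \<gamma> f v \<le> qenv UNIV \<gamma> f (permv p v)" by (simp add: permv_inv_cancel[OF p])
qed


theorem proposition1:
  fixes f :: "real^('n::{finite,linorder}) \<Rightarrow> ereal" and \<gamma> :: real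
  assumes f_nonneg: "\<forall>x. 0 \<le> f x"
    and f_sym: "symmetric_fun f"
    and \<gamma>_pos: "\<gamma> > 0"
  defines "F \<equiv> (\<lambda>X :: complex^'n::{finite,linorder}^'n::{finite,linorder}. f (eigvals X))"
  shows "(\<forall>X \<in> Herm. qenv Herm \<gamma> F X = qenv UNIV \<gamma> f (eigvals X))
    \<and> ((\<exists>x. f x < \<infinity>) \<longrightarrow>
        (\<forall>\<rho> > \<gamma>. \<forall>X \<in> Herm. \<forall>U. unitary U \<and> X = U ** diagm (eigvals X) ** adj U \<longrightarrow>
           prox Herm (qenv Herm \<gamma> F) \<rho> X
             = (\<lambda>v. U ** diagm v ** adj U) ` prox UNIV (qenv UNIV \<gamma> f) \<rho> (eigvals X)))"
proof
  have P1: "qenv Herm \<gamma> F X = qenv UNIV \<gamma> f (eigvals X)" if "X \<in> Herm" for X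
    unfolding F_def by (rule part1[OF f_sym \<gamma>_pos that])
  show "\<forall>X \<in> Herm. qenv Herm \<gamma> F X = qenv UNIV \<gamma> f (eigvals X)" using P1 by blast
  show "(\<exists>x. f x < \<infinity>) \<longrightarrow>
        (\<forall>\<rho> > \<gamma>. \<forall>X \<in> Herm. \<forall>U. unitary U \<and> X = U ** diagm (eigvals X) ** adj U \<longrightarrow>
           prox Herm (qenv Herm \<gamma> F) \<rho> X
             = (\<lambda>v. U ** diagm v ** adj U) ` prox UNIV (qenv UNIV \<gamma> f) \<rho> (eigvals X))"
  proof (intro impI allI ballI)
    assume "\<exists>x. f x < \<infinity>"
    then obtain x0 where x0: "f x0 < \<infinity>" by blast
    fix \<rho> :: real and X U :: "complex^'n::{finite,linorder}^'n::{finite,linorder}"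
    assume \<rho>: "\<rho> > \<gamma>" and XH: "X \<in> Herm" and UX: "unitary U \<and> X = U ** diagm (eigvals X) ** adj U"
    have u: "unitary U" and Xd: "X = U ** diagm (eigvals X) ** adj U" using UX by auto
    define x where "x = eigvals X"
    let ?h = "qenv UNIV \<gamma> f" and ?H = "qenv Herm \<gamma> F"
    define \<Phi> where "\<Phi> Z = ?H Z / ereal \<rho> + ereal ((norm (Z - X))\<^sup>2 / 2)" for Z
    define \<phi> where "\<phi> v = ?h v / ereal \<rho> + ereal ((norm (v - x))\<^sup>2 / 2)" for v
    have hX: "hermitian X" using XH by (simp add: Herm_def)
    have Hconj: "?H (U ** diagm u ** adj U) = ?h u" for u
    proof -
      obtain p where p: "p permutes UNIV" and e: "eigvals (U ** diagm u ** adj U) = permv p u"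
        using eigvals_conj[OF u, of u] by blast
      have "?H (U ** diagm u ** adj U) = ?h (eigvals (U ** diagm u ** adj U))" by (rule P1[OF Herm_conj])
      also have "\<dots> = ?h (permv p u)" by (simp only: e)
      also have "\<dots> = ?h u" by (rule qenv_sym[OF f_sym p])
      finally show ?thesis .
    qed
    have \<Phi>conj: "\<Phi> (U ** diagm u ** adj U) = \<phi> u" for u
    proof -
      have "norm (U ** diagm u ** adj U - X) = norm (u - x)"
      proof -
        have Xd': "X = U ** diagm x ** adj U" unfolding x_def by (rule Xd)
        show ?thesis by (subst Xd') (rule norm_conj_diff[OF u])
      qed
      thus ?thesis by (simp add: \<Phi>_def \<phi>_def Hconj)
    qed
    have \<Phi>ge: "\<phi> (eigvals Z) \<le> \<Phi> Z" if Z: "Z \<in> Herm" for Z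
    proof -
      have hZ: "hermitian Z" using Z by (simp add: Herm_def)
      have "norm (eigvals Z - x) \<le> norm (Z - X)" unfolding x_def by (rule HW[OF hZ hX])
      hence "(norm (eigvals Z - x))\<^sup>2 / 2 \<le> (norm (Z - X))\<^sup>2 / 2"
        by (intro divide_right_mono power_mono) auto
      hence "ereal ((norm (eigvals Z - x))\<^sup>2 / 2) \<le> ereal ((norm (Z - X))\<^sup>2 / 2)" by simp
      hence "?h (eigvals Z) / ereal \<rho> + ereal ((norm (eigvals Z - x))\<^sup>2 / 2)
          \<le> ?h (eigvals Z) / ereal \<rho> + ereal ((norm (Z - X))\<^sup>2 / 2)"
        by (rule add_left_mono)
      thus ?thesis using P1[OF Z] by (simp add: \<Phi>_def \<phi>_def)
    qed
    have proxH: "prox Herm ?H \<rho> X = {V \<in> Herm. \<forall>Z\<in>Herm. \<Phi> V \<le> \<Phi> Z}"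
      by (simp add: prox_def \<Phi>_def)
    have proxh: "prox UNIV ?h \<rho> x = {v. \<forall>u. \<phi> v \<le> \<phi> u}"
      by (simp add: prox_def \<phi>_def)
    show "prox Herm ?H \<rho> X = (\<lambda>v. U ** diagm v ** adj U) ` prox UNIV ?h \<rho> (eigvals X)"
    proof
      show "(\<lambda>v. U ** diagm v ** adj U) ` prox UNIV ?h \<rho> (eigvals X) \<subseteq> prox Herm ?H \<rho> X"
      proof
        fix V assume "V \<in> (\<lambda>v. U ** diagm v ** adj U) ` prox UNIV ?h \<rho> (eigvals X)"
        then obtain v where V: "V = U ** diagm v ** adj U" and v: "\<forall>u. \<phi> v \<le> \<phi> u"
          using proxh by (auto simp: x_def)
        have "\<Phi> V \<le> \<Phi> Z" if "Z \<in> Herm" for Z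
        proof -
          have "\<Phi> V = \<phi> v" by (simp add: V \<Phi>conj)
          also have "\<dots> \<le> \<phi> (eigvals Z)" using v by blast
          also have "\<dots> \<le> \<Phi> Z" by (rule \<Phi>ge[OF that])
          finally show ?thesis .
        qed
        moreover have "V \<in> Herm" by (simp add: V Herm_conj)
        ultimately show "V \<in> prox Herm ?H \<rho> X" using proxH by blast
      qed
    next
      show "prox Herm ?H \<rho> X \<subseteq> (\<lambda>v. U ** diagm v ** adj U) ` prox UNIV ?h \<rho> (eigvals X)"
      proof
        fix V assume V: "V \<in> prox Herm ?H \<rho> X"
        hence VH: "V \<in> Herm" and Vm: "\<forall>Z\<in>Herm. \<Phi> V \<le> \<Phi> Z" using proxH by auto
        define w where "w = eigvals V"
        define V0 where "V0 = U ** diagm w ** adj U"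
        have V0H: "V0 \<in> Herm" by (simp add: V0_def Herm_conj)
        have \<Phi>V0: "\<Phi> V0 = \<phi> w" by (simp add: V0_def \<Phi>conj)
        have "\<Phi> V0 \<le> \<Phi> Z" if "Z \<in> Herm" for Z
        proof -
          have "\<Phi> V0 = \<phi> w" by (rule \<Phi>V0)
          also have "\<dots> \<le> \<Phi> V" unfolding w_def by (rule \<Phi>ge[OF VH])
          also have "\<dots> \<le> \<Phi> Z" using Vm that by blast
          finally show ?thesis .
        qed
        hence V0p: "V0 \<in> prox Herm ?H \<rho> X" using proxH V0H by blast
        have fin: "\<exists>z\<in>Herm. ?H z < \<infinity>"
        proof
          let ?Z0 = "mat 1 ** diagm x0 ** adj (mat 1) :: complex^'n::{finite,linorder}^'n::{finite,linorder}"
          show "?Z0 \<in> Herm" by (rule Herm_conj)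
          have "?H ?Z0 \<le> F ?Z0" by (rule qenv_le) (rule Herm_conj)
          also have "F ?Z0 = f x0" unfolding F_def by (rule f_conj[OF f_sym unitary_one])
          finally show "?H ?Z0 < \<infinity>" using x0 by (rule le_less_trans)
        qed
        have "V = V0"
          by (rule prox_unique[OF _ _ \<gamma>_pos \<rho> fin V V0p])
             (auto simp: Herm_mid F_def f_nonneg)
        moreover have "w \<in> prox UNIV ?h \<rho> (eigvals X)"
        proof -
          have "\<phi> w \<le> \<phi> u" for u
          proof -
            have "\<phi> w = \<Phi> V0" by (rule \<Phi>V0[symmetric])
            also have "\<dots> \<le> \<Phi> (U ** diagm u ** adj U)" using Vm V0p proxH Herm_conj by blast
            also have "\<dots> = \<phi> u" by (rule \<Phi>conj)
            finally show ?thesis .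
          qed
          thus ?thesis using proxh by (simp add: x_def)
        qed
        ultimately show "V \<in> (\<lambda>v. U ** diagm v ** adj U) ` prox UNIV ?h \<rho> (eigvals X)"
          unfolding V0_def by blast
      qed
    qed
  qed
qed


end
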